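(* Let $p\ge 5$ be a prime and $G_{10}=\langle a,b,c,d\mid a^p=b^p=c^p=d^p=1,\ dc=bcd,\ db=abd,\ ad=da,\ bc=cb,\ ac=ca,\ ab=ba\rangle$, with $K=\langle d\rangle$. Then $\mathrm{Aut}_K(G_{10})$ is isomorphic to a group of the form $\mathbb{Z}_{p-1}\times((\mathbb{Z}_p\times\mathbb{Z}_p)\rtimes\mathbb{Z}_{p-1})$.
   Context: $\mathrm{Aut}_K(G)=\{\theta\in\mathrm{Aut}(G)\mid\theta(K)=K\}$. $\mathbb{Z}_m$ is the cyclic group of order $m$. *)

theory Defs
  imports "HOL-Algebra.Algebra"
begin

definition G10_relations :: "('a, 'c) monoid_scheme \<Rightarrow> nat \<Rightarrow> 'a \<Rightarrow> 'a \<Rightarrow> 'a \<Rightarrow> 'a \<Rightarrow> bool" where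
  "G10_relations G p a b c d \<longleftrightarrow>
     a \<in> carrier G \<and> b \<in> carrier G \<and> c \<in> carrier G \<and> d \<in> carrier G \<and>
     a [^]\<^bsub>G\<^esub> p = \<one>\<^bsub>G\<^esub> \<and> b [^]\<^bsub>G\<^esub> p = \<one>\<^bsub>G\<^esub> \<and>
     c [^]\<^bsub>G\<^esub> p = \<one>\<^bsub>G\<^esub> \<and> d [^]\<^bsub>G\<^esub> p = \<one>\<^bsub>G\<^esub> \<and>
     d \<otimes>\<^bsub>G\<^esub> c = b \<otimes>\<^bsub>G\<^esub> c \<otimes>\<^bsub>G\<^esub> d \<and>
     d \<otimes>\<^bsub>G\<^esub> b = a \<otimes>\<^bsub>G\<^esub> b \<otimes>\<^bsub>G\<^esub> d \<and>
     a \<otimes>\<^bsub>G\<^esub> d = d \<otimes>\<^bsub>G\<^esub> a \<and>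
     b \<otimes>\<^bsub>G\<^esub> c = c \<otimes>\<^bsub>G\<^esub> b \<and>
     a \<otimes>\<^bsub>G\<^esub> c = c \<otimes>\<^bsub>G\<^esub> a \<and>
     a \<otimes>\<^bsub>G\<^esub> b = b \<otimes>\<^bsub>G\<^esub> a"

text \<open>G (with distinguished elements a b c d) is a presentation of
  G_10 = <a,b,c,d | relations>: it is a group generated by a b c d satisfying the
  relations, and it has the universal property of the presented group (tested against
  all groups whose carrier lies in the countable type nat, which suffices since the
  presented group is finitely presented hence countable).\<close>
definition is_G10_presentation :: "('a, 'c) monoid_scheme \<Rightarrow> nat \<Rightarrow> 'a \<Rightarrow> 'a \<Rightarrow> 'a \<Rightarrow> 'a \<Rightarrow> bool" where
  "is_G10_presentation G p a b c d \<longleftrightarrow>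
     group G \<and> G10_relations G p a b c d \<and>
     generate G {a, b, c, d} = carrier G \<and>
     (\<forall>(H :: nat monoid) x y z w. group H \<longrightarrow> G10_relations H p x y z w \<longrightarrow>
        (\<exists>h \<in> hom G H. h a = x \<and> h b = y \<and> h c = z \<and> h d = w))"

definition AutK :: "('a, 'c) monoid_scheme \<Rightarrow> 'a set \<Rightarrow> ('a \<Rightarrow> 'a) monoid" where
  "AutK G K = (AutoGroup G)\<lparr>carrier := {\<theta> \<in> auto G. \<theta> ` K = K}\<rparr>"

definition semidirect_product ::
  "('a, 'c) monoid_scheme \<Rightarrow> ('b, 'd) monoid_scheme \<Rightarrow> ('b \<Rightarrow> 'a \<Rightarrow> 'a) \<Rightarrow> ('a \<times> 'b) monoid" where
  "semidirect_product N H \<phi> =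
     \<lparr>carrier = carrier N \<times> carrier H,
      monoid.mult = (\<lambda>(n, h) (n', h'). (n \<otimes>\<^bsub>N\<^esub> \<phi> h n', h \<otimes>\<^bsub>H\<^esub> h')),
      one = (\<one>\<^bsub>N\<^esub>, \<one>\<^bsub>H\<^esub>)\<rparr>"

end

theory Submission
  imports Defs "HOL-Number_Theory.Number_Theory"
begin


type_synonym q4 = "int \<times> int \<times> int \<times> int"

definition mm :: "q4 \<Rightarrow> q4 \<Rightarrow> q4" where
  "mm = (\<lambda>(x1,y1,z1,w1) (x2,y2,z2,w2).
     (x1 + x2 + 2*w1*y2 + w1^2*z2, y1 + y2 + w1*z2, z1 + z2, w1 + w2))"

definition red :: "int \<Rightarrow> q4 \<Rightarrow> q4" where
  "red P = (\<lambda>(x,y,z,w). (x mod P, y mod P, z mod P, w mod P))"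

lemma mm_simp[simp]: "mm (x1,y1,z1,w1) (x2,y2,z2,w2) =
     (x1 + x2 + 2*w1*y2 + w1^2*z2, y1 + y2 + w1*z2, z1 + z2, w1 + w2)"
  by (simp add: mm_def)

lemma red_simp[simp]: "red P (x,y,z,w) = (x mod P, y mod P, z mod P, w mod P)"
  by (simp add: red_def)

lemma red_eq_iff: "red P (x,y,z,w) = red P (x',y',z',w') \<longleftrightarrow>
   [x = x'] (mod P) \<and> [y = y'] (mod P) \<and> [z = z'] (mod P) \<and> [w = w'] (mod P)"
  by (simp add: cong_def)

lemma red_red[simp]: "red P (red P m) = red P m"
  by (cases m) auto

lemma mm_resp: "red P a = red P a' \<Longrightarrow> red P b = red P b' \<Longrightarrow> red P (mm a b) = red P (mm a' b')"
  apply (cases a; cases a'; cases b; cases b')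
  apply (simp only: red_eq_iff mm_simp)
  apply (intro conjI cong_add cong_mult cong_pow cong_refl; simp)
  done

lemma mm_assoc: "mm (mm a b) c = mm a (mm b c)"
  by (cases a; cases b; cases c) (simp add: algebra_simps power2_eq_square)

definition Mgrp :: "int \<Rightarrow> q4 monoid" where
  "Mgrp P = \<lparr>carrier = {0..<P} \<times> {0..<P} \<times> {0..<P} \<times> {0..<P},
     monoid.mult = (\<lambda>a b. red P (mm a b)), one = (0,0,0,0)\<rparr>"

lemma Mgrp_carrier: "carrier (Mgrp P) = {0..<P} \<times> {0..<P} \<times> {0..<P} \<times> {0..<P}"
  by (simp add: Mgrp_def)
lemma Mgrp_mult: "a \<otimes>\<^bsub>Mgrp P\<^esub> b = red P (mm a b)"
  by (simp add: Mgrp_def)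
lemma Mgrp_one: "\<one>\<^bsub>Mgrp P\<^esub> = (0,0,0,0)"
  by (simp add: Mgrp_def)

lemma red_in_carrier: "P > 0 \<Longrightarrow> red P m \<in> carrier (Mgrp P)"
  by (cases m) (simp add: Mgrp_carrier)

lemma red_carrier: "m \<in> carrier (Mgrp P) \<Longrightarrow> red P m = m"
  by (cases m) (auto simp: Mgrp_carrier)

lemma group_Mgrp: assumes "P > 0" shows "group (Mgrp P)"
proof (rule groupI)
  fix x y assume "x \<in> carrier (Mgrp P)" "y \<in> carrier (Mgrp P)"
  then show "x \<otimes>\<^bsub>Mgrp P\<^esub> y \<in> carrier (Mgrp P)" using assms by (simp add: Mgrp_mult red_in_carrier)
next
  show "\<one>\<^bsub>Mgrp P\<^esub> \<in> carrier (Mgrp P)" using assms by (simp add: Mgrp_one Mgrp_carrier)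
next
  fix x y z assume "x \<in> carrier (Mgrp P)" "y \<in> carrier (Mgrp P)" "z \<in> carrier (Mgrp P)"
  have "red P (mm (red P (mm x y)) z) = red P (mm (mm x y) z)"
    by (rule mm_resp) simp_all
  also have "\<dots> = red P (mm x (mm y z))" by (simp add: mm_assoc)
  also have "\<dots> = red P (mm x (red P (mm y z)))"
    by (rule mm_resp) simp_all
  finally show "x \<otimes>\<^bsub>Mgrp P\<^esub> y \<otimes>\<^bsub>Mgrp P\<^esub> z = x \<otimes>\<^bsub>Mgrp P\<^esub> (y \<otimes>\<^bsub>Mgrp P\<^esub> z)"
    by (simp add: Mgrp_mult)
next
  fix x assume x: "x \<in> carrier (Mgrp P)"
  then show "\<one>\<^bsub>Mgrp P\<^esub> \<otimes>\<^bsub>Mgrp P\<^esub> x = x"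
    by (cases x) (auto simp: Mgrp_one Mgrp_mult Mgrp_carrier)
next
  fix x assume x: "x \<in> carrier (Mgrp P)"
  obtain x1 y1 z1 w1 where xe: "x = (x1,y1,z1,w1)" by (cases x)
  let ?y = "red P (2*w1*y1 - w1^2*z1 - x1, w1*z1 - y1, 0 - z1, 0 - w1)"
  have "?y \<in> carrier (Mgrp P)" using assms by (rule red_in_carrier)
  moreover have "?y \<otimes>\<^bsub>Mgrp P\<^esub> x = \<one>\<^bsub>Mgrp P\<^esub>"
  proof -
    have "red P (mm ?y x) = red P (mm (2*w1*y1 - w1^2*z1 - x1, w1*z1 - y1, 0 - z1, 0 - w1) x)"
      by (rule mm_resp) simp_all
    also have "\<dots> = (0,0,0,0)" by (simp add: xe algebra_simps power2_eq_square)
    finally show ?thesis by (simp add: Mgrp_mult Mgrp_one)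
  qed
  ultimately show "\<exists>y\<in>carrier (Mgrp P). y \<otimes>\<^bsub>Mgrp P\<^esub> x = \<one>\<^bsub>Mgrp P\<^esub>" by blast
qed



lemma Mpow_N:
  assumes "P > 0" "(x,y,z,0) \<in> carrier (Mgrp P)"
  shows "(x,y,z,0) [^]\<^bsub>Mgrp P\<^esub> (n::nat) = red P (int n * x, int n * y, int n * z, 0)"
proof (induction n)
  case 0 then show ?case by (simp add: Mgrp_one)
next
  case (Suc n)
  have "(x,y,z,0) [^]\<^bsub>Mgrp P\<^esub> Suc n = red P (mm (red P (int n * x, int n * y, int n * z, 0)) (x,y,z,0))"
    by (simp add: Suc Mgrp_mult)
  also have "\<dots> = red P (mm (int n * x, int n * y, int n * z, 0) (x,y,z,0))"
    by (rule mm_resp) simp_all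
  also have "\<dots> = red P (int (Suc n) * x, int (Suc n) * y, int (Suc n) * z, 0)"
    by (simp add: algebra_simps)
  finally show ?case .
qed

lemma Mpow_d:
  assumes "P > 1"
  shows "(0,0,0,1) [^]\<^bsub>Mgrp P\<^esub> (n::nat) = red P (0, 0, 0, int n)"
proof (induction n)
  case 0 then show ?case by (simp add: Mgrp_one)
next
  case (Suc n)
  have "(0,0,0,1) [^]\<^bsub>Mgrp P\<^esub> Suc n = red P (mm (red P (0,0,0,int n)) (0,0,0,1))"
    by (simp add: Suc Mgrp_mult)
  also have "\<dots> = red P (mm (0,0,0,int n) (0,0,0,1))"
    by (rule mm_resp) simp_all
  also have "\<dots> = red P (0, 0, 0, int (Suc n))"
    by (simp add: algebra_simps)
  finally show ?case .
qed

definition "aM = ((2::int),(0::int),(0::int),(0::int))"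
definition "bM = ((1::int),(1::int),(0::int),(0::int))"
definition "cM = ((0::int),(0::int),(1::int),(0::int))"
definition "dM = ((0::int),(0::int),(0::int),(1::int))"

lemma M_rel:
  assumes "p \<ge> 5"
  shows "G10_relations (Mgrp (int p)) p aM bM cM dM"
proof -
  have P: "int p > 0" "int p > 1" using assms by auto
  have c: "aM \<in> carrier (Mgrp (int p))" "bM \<in> carrier (Mgrp (int p))"
     "cM \<in> carrier (Mgrp (int p))" "dM \<in> carrier (Mgrp (int p))"
    using assms by (auto simp: aM_def bM_def cM_def dM_def Mgrp_carrier)
  have "aM [^]\<^bsub>Mgrp (int p)\<^esub> p = \<one>\<^bsub>Mgrp (int p)\<^esub>"
    using Mpow_N[OF P(1), of 2 0 0 p] c by (simp add: aM_def Mgrp_one)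
  moreover have "bM [^]\<^bsub>Mgrp (int p)\<^esub> p = \<one>\<^bsub>Mgrp (int p)\<^esub>"
    using Mpow_N[OF P(1), of 1 1 0 p] c by (simp add: bM_def Mgrp_one)
  moreover have "cM [^]\<^bsub>Mgrp (int p)\<^esub> p = \<one>\<^bsub>Mgrp (int p)\<^esub>"
    using Mpow_N[OF P(1), of 0 0 1 p] c by (simp add: cM_def Mgrp_one)
  moreover have "dM [^]\<^bsub>Mgrp (int p)\<^esub> p = \<one>\<^bsub>Mgrp (int p)\<^esub>"
    using Mpow_d[OF P(2), of p] c by (simp add: dM_def Mgrp_one)
  moreover have "dM \<otimes>\<^bsub>Mgrp (int p)\<^esub> cM = bM \<otimes>\<^bsub>Mgrp (int p)\<^esub> cM \<otimes>\<^bsub>Mgrp (int p)\<^esub> dM"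
    using assms by (simp add: Mgrp_mult aM_def bM_def cM_def dM_def)
  moreover have "dM \<otimes>\<^bsub>Mgrp (int p)\<^esub> bM = aM \<otimes>\<^bsub>Mgrp (int p)\<^esub> bM \<otimes>\<^bsub>Mgrp (int p)\<^esub> dM"
    using assms by (simp add: Mgrp_mult aM_def bM_def cM_def dM_def)
  moreover have "aM \<otimes>\<^bsub>Mgrp (int p)\<^esub> dM = dM \<otimes>\<^bsub>Mgrp (int p)\<^esub> aM"
    using assms by (simp add: Mgrp_mult aM_def bM_def cM_def dM_def)
  moreover have "bM \<otimes>\<^bsub>Mgrp (int p)\<^esub> cM = cM \<otimes>\<^bsub>Mgrp (int p)\<^esub> bM"
    using assms by (simp add: Mgrp_mult aM_def bM_def cM_def dM_def)
  moreover have "aM \<otimes>\<^bsub>Mgrp (int p)\<^esub> cM = cM \<otimes>\<^bsub>Mgrp (int p)\<^esub> aM"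
    using assms by (simp add: Mgrp_mult aM_def bM_def cM_def dM_def)
  moreover have "aM \<otimes>\<^bsub>Mgrp (int p)\<^esub> bM = bM \<otimes>\<^bsub>Mgrp (int p)\<^esub> aM"
    using assms by (simp add: Mgrp_mult aM_def bM_def cM_def dM_def)
  ultimately show ?thesis using c by (simp add: G10_relations_def)
qed

lemma nat_copy:
  assumes "group M" "finite (carrier M)"
  shows "\<exists>(H :: nat monoid) f. group H \<and> f \<in> iso M H"
proof -
  interpret M: group M by fact
  obtain f :: "_ \<Rightarrow> nat" where inj: "inj_on f (carrier M)"
    using finite_imp_inj_to_nat_seg[OF assms(2)] by blast
  define H0 :: "nat monoid" where "H0 = \<lparr>carrier = UNIV,
     monoid.mult = (\<lambda>x y. f (inv_into (carrier M) f x \<otimes>\<^bsub>M\<^esub> inv_into (carrier M) f y)),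
     one = f \<one>\<^bsub>M\<^esub>\<rparr>"
  have hom0: "f \<in> hom M H0"
    using inj by (auto simp: hom_def H0_def)
  define H where "H = H0\<lparr>carrier := f ` carrier M, one := f \<one>\<^bsub>M\<^esub>\<rparr>"
  have "group H" unfolding H_def by (rule M.hom_imp_img_group[OF hom0])
  moreover have "f \<in> iso M H"
    using inj hom0 by (auto simp: iso_def hom_def H_def bij_betw_def)
  ultimately show ?thesis by blast
qed

lemma rel_transfer:
  assumes "group M" "group H" "f \<in> hom M H" "G10_relations M p x y z w"
  shows "G10_relations H p (f x) (f y) (f z) (f w)"
proof -
  interpret gh: group_hom M H f using assms by (simp add: group_hom_def group_hom_axioms_def)
  have c: "x \<in> carrier M" "y \<in> carrier M" "z \<in> carrier M" "w \<in> carrier M"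
    using assms(4) by (simp_all add: G10_relations_def)
  have r: "x [^]\<^bsub>M\<^esub> p = \<one>\<^bsub>M\<^esub>" "y [^]\<^bsub>M\<^esub> p = \<one>\<^bsub>M\<^esub>"
     "z [^]\<^bsub>M\<^esub> p = \<one>\<^bsub>M\<^esub>" "w [^]\<^bsub>M\<^esub> p = \<one>\<^bsub>M\<^esub>"
     "w \<otimes>\<^bsub>M\<^esub> z = y \<otimes>\<^bsub>M\<^esub> z \<otimes>\<^bsub>M\<^esub> w"
     "w \<otimes>\<^bsub>M\<^esub> y = x \<otimes>\<^bsub>M\<^esub> y \<otimes>\<^bsub>M\<^esub> w"
     "x \<otimes>\<^bsub>M\<^esub> w = w \<otimes>\<^bsub>M\<^esub> x"
     "y \<otimes>\<^bsub>M\<^esub> z = z \<otimes>\<^bsub>M\<^esub> y"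
     "x \<otimes>\<^bsub>M\<^esub> z = z \<otimes>\<^bsub>M\<^esub> x"
     "x \<otimes>\<^bsub>M\<^esub> y = y \<otimes>\<^bsub>M\<^esub> x"
    using assms(4) by (simp_all add: G10_relations_def)
  have p: "f u [^]\<^bsub>H\<^esub> p = \<one>\<^bsub>H\<^esub>" if "u \<in> carrier M" "u [^]\<^bsub>M\<^esub> p = \<one>\<^bsub>M\<^esub>" for u
  proof -
    have "f (u [^]\<^bsub>M\<^esub> p) = f u [^]\<^bsub>H\<^esub> p" by (rule gh.hom_nat_pow[OF that(1)])
    then show ?thesis using that(2) gh.hom_one by simp
  qed
  have m2: "f u \<otimes>\<^bsub>H\<^esub> f v = f v \<otimes>\<^bsub>H\<^esub> f u"
    if "u \<in> carrier M" "v \<in> carrier M" "u \<otimes>\<^bsub>M\<^esub> v = v \<otimes>\<^bsub>M\<^esub> u" for u v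
  proof -
    have "f (u \<otimes>\<^bsub>M\<^esub> v) = f (v \<otimes>\<^bsub>M\<^esub> u)" using that(3) by simp
    then show ?thesis using that(1,2) by (simp add: gh.hom_mult)
  qed
  have m3: "f u \<otimes>\<^bsub>H\<^esub> f v = f s \<otimes>\<^bsub>H\<^esub> f v \<otimes>\<^bsub>H\<^esub> f u"
    if "u \<in> carrier M" "v \<in> carrier M" "s \<in> carrier M"
      "u \<otimes>\<^bsub>M\<^esub> v = s \<otimes>\<^bsub>M\<^esub> v \<otimes>\<^bsub>M\<^esub> u" for u v s
  proof -
    have "f (u \<otimes>\<^bsub>M\<^esub> v) = f (s \<otimes>\<^bsub>M\<^esub> v \<otimes>\<^bsub>M\<^esub> u)" using that(4) by simp
    then show ?thesis using that(1,2,3) by (simp add: gh.hom_mult)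
  qed
  show ?thesis unfolding G10_relations_def
    using c r p m2 m3 by (simp add: gh.hom_closed)
qed

lemma G10_hom:
  assumes pres: "is_G10_presentation G p a b c d" and M: "group M" "finite (carrier M)"
    and rel: "G10_relations M p x y z w"
  shows "\<exists>h \<in> hom G M. h a = x \<and> h b = y \<and> h c = z \<and> h d = w"
proof -
  interpret M: group M by fact
  have G: "group G" using pres by (simp add: is_G10_presentation_def)
  interpret G: group G by fact
  obtain H :: "nat monoid" and f where H: "group H" "f \<in> iso M H" using nat_copy[OF M] by blast
  have fh: "f \<in> hom M H" using H by (simp add: iso_def)
  have "G10_relations H p (f x) (f y) (f z) (f w)" by (rule rel_transfer[OF M(1) H(1) fh rel])
  then obtain h0 where h0: "h0 \<in> hom G H" "h0 a = f x" "h0 b = f y" "h0 c = f z" "h0 d = f w"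
    using pres H(1) unfolding is_G10_presentation_def by blast
  define fi where "fi = inv_into (carrier M) f"
  have fi: "fi \<in> iso H M" unfolding fi_def by (rule M.iso_set_sym[OF H(2)])
  have comp: "compose (carrier G) fi h0 \<in> hom G M"
    by (rule G.hom_compose[OF h0(1)]) (use fi in \<open>simp add: iso_def\<close>)
  have inj: "inj_on f (carrier M)" using H(2) by (simp add: iso_def bij_betw_def)
  have rc: "x \<in> carrier M" "y \<in> carrier M" "z \<in> carrier M" "w \<in> carrier M"
    "a \<in> carrier G" "b \<in> carrier G" "c \<in> carrier G" "d \<in> carrier G"
    using rel pres by (auto simp: G10_relations_def is_G10_presentation_def)
  show ?thesis
    by (rule bexI[OF _ comp]) (simp add: compose_def h0 rc fi_def inv_into_f_f[OF inj])
qed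



lemma (in group) comm_pow:
  assumes "x \<in> carrier G" "y \<in> carrier G" "x \<otimes> y = y \<otimes> x"
  shows "x \<otimes> y [^] (n::nat) = y [^] n \<otimes> x"
proof (induction n)
  case 0 then show ?case using assms by simp
next
  case (Suc n)
  have "x \<otimes> y [^] Suc n = (x \<otimes> y [^] n) \<otimes> y" using assms by (simp add: m_assoc)
  also have "\<dots> = y [^] n \<otimes> (x \<otimes> y)" using assms Suc by (simp add: m_assoc)
  also have "\<dots> = y [^] Suc n \<otimes> x" using assms by (simp add: m_assoc)
  finally show ?case .
qed

lemma (in group) pow_comm_self: "x \<in> carrier G \<Longrightarrow> x \<otimes> x [^] (n::nat) = x [^] n \<otimes> x"
  by (simp add: nat_pow_Suc2[symmetric])

lemma (in group) pow_comm_self2: "x \<in> carrier G \<Longrightarrow> r \<in> carrier G \<Longrightarrow> x \<otimes> (x [^] (n::nat) \<otimes> r) = x [^] n \<otimes> (x \<otimes> r)"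
  by (simp add: m_assoc[symmetric] pow_comm_self)

lemma (in group) conj_pow:
  assumes "d \<in> carrier G" "u \<in> carrier G" "v \<in> carrier G"
    "d \<otimes> u = v \<otimes> u \<otimes> d" "v \<otimes> u = u \<otimes> v"
  shows "d \<otimes> u [^] (n::nat) = v [^] n \<otimes> (u [^] n \<otimes> d)"
proof (induction n)
  case 0 then show ?case using assms by simp
next
  case (Suc n)
  have vu: "v \<otimes> u [^] n = u [^] n \<otimes> v" by (rule comm_pow[OF assms(3) assms(2) assms(5)])
  have "d \<otimes> u [^] Suc n = (d \<otimes> u [^] n) \<otimes> u" using assms(1-3) by (simp add: m_assoc)
  also have "\<dots> = (v [^] n \<otimes> (u [^] n \<otimes> d)) \<otimes> u" by (simp only: Suc)
  also have "\<dots> = v [^] n \<otimes> (u [^] n \<otimes> (d \<otimes> u))" using assms(1-3) by (simp add: m_assoc)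
  also have "\<dots> = v [^] n \<otimes> (u [^] n \<otimes> (v \<otimes> u \<otimes> d))" by (simp only: assms(4))
  also have "\<dots> = v [^] n \<otimes> ((u [^] n \<otimes> v) \<otimes> (u \<otimes> d))" using assms(1-3) by (simp add: m_assoc)
  also have "\<dots> = v [^] n \<otimes> ((v \<otimes> u [^] n) \<otimes> (u \<otimes> d))" by (simp only: vu)
  also have "\<dots> = v [^] Suc n \<otimes> (u [^] Suc n \<otimes> d)" using assms(1-3) by (simp add: m_assoc)
  finally show ?case .
qed

lemma (in group) pow_mod_exp:
  assumes "x \<in> carrier G" "x [^] p = \<one>"
  shows "x [^] (n::nat) = x [^] (n mod p)"
proof -
  have "(x [^] p) [^] (n div p) \<otimes> x [^] (n mod p) = x [^] (p * (n div p) + n mod p)"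
    using assms(1) by (simp only: nat_pow_pow nat_pow_mult nat_pow_closed)
  also have "p * (n div p) + n mod p = n" by simp
  finally show ?thesis using assms by simp
qed

context
  fixes G :: "('a, 'c) monoid_scheme" and p :: nat and a b c d :: 'a
  assumes pres: "is_G10_presentation G p a b c d" and p5: "p \<ge> 5"
begin

interpretation G: group G using pres by (simp add: is_G10_presentation_def)

definition "nf i j k l = a [^]\<^bsub>G\<^esub> (i::nat) \<otimes>\<^bsub>G\<^esub> (b [^]\<^bsub>G\<^esub> (j::nat) \<otimes>\<^bsub>G\<^esub> (c [^]\<^bsub>G\<^esub> (k::nat) \<otimes>\<^bsub>G\<^esub> d [^]\<^bsub>G\<^esub> (l::nat)))"

lemma carr: "a \<in> carrier G" "b \<in> carrier G" "c \<in> carrier G" "d \<in> carrier G"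
  using pres by (simp_all add: is_G10_presentation_def G10_relations_def)

lemma relp: "a [^]\<^bsub>G\<^esub> p = \<one>\<^bsub>G\<^esub>" "b [^]\<^bsub>G\<^esub> p = \<one>\<^bsub>G\<^esub>"
     "c [^]\<^bsub>G\<^esub> p = \<one>\<^bsub>G\<^esub>" "d [^]\<^bsub>G\<^esub> p = \<one>\<^bsub>G\<^esub>"
  using pres by (simp_all add: is_G10_presentation_def G10_relations_def)

lemma relr:
     "d \<otimes>\<^bsub>G\<^esub> c = b \<otimes>\<^bsub>G\<^esub> c \<otimes>\<^bsub>G\<^esub> d"
     "d \<otimes>\<^bsub>G\<^esub> b = a \<otimes>\<^bsub>G\<^esub> b \<otimes>\<^bsub>G\<^esub> d"
     "a \<otimes>\<^bsub>G\<^esub> d = d \<otimes>\<^bsub>G\<^esub> a"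
     "b \<otimes>\<^bsub>G\<^esub> c = c \<otimes>\<^bsub>G\<^esub> b"
     "a \<otimes>\<^bsub>G\<^esub> c = c \<otimes>\<^bsub>G\<^esub> a"
     "a \<otimes>\<^bsub>G\<^esub> b = b \<otimes>\<^bsub>G\<^esub> a"
  using pres by (simp_all add: is_G10_presentation_def G10_relations_def)

lemma nf_carrier: "nf i j k l \<in> carrier G"
  using carr by (simp add: nf_def)

lemma nf_a: "a \<otimes>\<^bsub>G\<^esub> nf i j k l = nf (Suc i) j k l"
  using carr by (simp add: nf_def G.m_assoc[symmetric] G.pow_comm_self)

lemma nf_b: "b \<otimes>\<^bsub>G\<^esub> nf i j k l = nf i (Suc j) k l"
proof -
  have "b \<otimes>\<^bsub>G\<^esub> nf i j k l = (b \<otimes>\<^bsub>G\<^esub> a [^]\<^bsub>G\<^esub> i) \<otimes>\<^bsub>G\<^esub> (b [^]\<^bsub>G\<^esub> j \<otimes>\<^bsub>G\<^esub> (c [^]\<^bsub>G\<^esub> k \<otimes>\<^bsub>G\<^esub> d [^]\<^bsub>G\<^esub> l))"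
    using carr by (simp add: nf_def G.m_assoc)
  also have "\<dots> = (a [^]\<^bsub>G\<^esub> i \<otimes>\<^bsub>G\<^esub> b) \<otimes>\<^bsub>G\<^esub> (b [^]\<^bsub>G\<^esub> j \<otimes>\<^bsub>G\<^esub> (c [^]\<^bsub>G\<^esub> k \<otimes>\<^bsub>G\<^esub> d [^]\<^bsub>G\<^esub> l))"
    using carr relr G.comm_pow[of b a i] by simp
  also have "\<dots> = nf i (Suc j) k l"
    using carr by (simp add: nf_def G.m_assoc G.pow_comm_self2)
  finally show ?thesis .
qed

lemma nf_c: "c \<otimes>\<^bsub>G\<^esub> nf i j k l = nf i j (Suc k) l"
proof -
  have "c \<otimes>\<^bsub>G\<^esub> nf i j k l = (c \<otimes>\<^bsub>G\<^esub> a [^]\<^bsub>G\<^esub> i) \<otimes>\<^bsub>G\<^esub> (b [^]\<^bsub>G\<^esub> j \<otimes>\<^bsub>G\<^esub> (c [^]\<^bsub>G\<^esub> k \<otimes>\<^bsub>G\<^esub> d [^]\<^bsub>G\<^esub> l))"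
    using carr by (simp add: nf_def G.m_assoc)
  also have "\<dots> = a [^]\<^bsub>G\<^esub> i \<otimes>\<^bsub>G\<^esub> ((c \<otimes>\<^bsub>G\<^esub> b [^]\<^bsub>G\<^esub> j) \<otimes>\<^bsub>G\<^esub> (c [^]\<^bsub>G\<^esub> k \<otimes>\<^bsub>G\<^esub> d [^]\<^bsub>G\<^esub> l))"
    using carr relr G.comm_pow[of c a i] by (simp add: G.m_assoc)
  also have "\<dots> = a [^]\<^bsub>G\<^esub> i \<otimes>\<^bsub>G\<^esub> ((b [^]\<^bsub>G\<^esub> j \<otimes>\<^bsub>G\<^esub> c) \<otimes>\<^bsub>G\<^esub> (c [^]\<^bsub>G\<^esub> k \<otimes>\<^bsub>G\<^esub> d [^]\<^bsub>G\<^esub> l))"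
    using carr relr G.comm_pow[of c b j] by simp
  also have "\<dots> = nf i j (Suc k) l"
    using carr by (simp add: nf_def G.m_assoc G.pow_comm_self2)
  finally show ?thesis .
qed

lemma nf_d: "d \<otimes>\<^bsub>G\<^esub> nf i j k l = nf (i + j) (j + k) k (Suc l)"
proof -
  have da: "d \<otimes>\<^bsub>G\<^esub> a [^]\<^bsub>G\<^esub> i = a [^]\<^bsub>G\<^esub> i \<otimes>\<^bsub>G\<^esub> d"
    using carr relr G.comm_pow[of d a i] by simp
  have db: "d \<otimes>\<^bsub>G\<^esub> b [^]\<^bsub>G\<^esub> j = a [^]\<^bsub>G\<^esub> j \<otimes>\<^bsub>G\<^esub> (b [^]\<^bsub>G\<^esub> j \<otimes>\<^bsub>G\<^esub> d)"
    using carr relr by (intro G.conj_pow) auto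
  have dc: "d \<otimes>\<^bsub>G\<^esub> c [^]\<^bsub>G\<^esub> k = b [^]\<^bsub>G\<^esub> k \<otimes>\<^bsub>G\<^esub> (c [^]\<^bsub>G\<^esub> k \<otimes>\<^bsub>G\<^esub> d)"
    using carr relr by (intro G.conj_pow) auto
  have "d \<otimes>\<^bsub>G\<^esub> nf i j k l = (d \<otimes>\<^bsub>G\<^esub> a [^]\<^bsub>G\<^esub> i) \<otimes>\<^bsub>G\<^esub> (b [^]\<^bsub>G\<^esub> j \<otimes>\<^bsub>G\<^esub> (c [^]\<^bsub>G\<^esub> k \<otimes>\<^bsub>G\<^esub> d [^]\<^bsub>G\<^esub> l))"
    using carr by (simp add: nf_def G.m_assoc)
  also have "\<dots> = a [^]\<^bsub>G\<^esub> i \<otimes>\<^bsub>G\<^esub> ((d \<otimes>\<^bsub>G\<^esub> b [^]\<^bsub>G\<^esub> j) \<otimes>\<^bsub>G\<^esub> (c [^]\<^bsub>G\<^esub> k \<otimes>\<^bsub>G\<^esub> d [^]\<^bsub>G\<^esub> l))"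
    using carr da by (simp add: G.m_assoc)
  also have "\<dots> = (a [^]\<^bsub>G\<^esub> i \<otimes>\<^bsub>G\<^esub> a [^]\<^bsub>G\<^esub> j) \<otimes>\<^bsub>G\<^esub> (b [^]\<^bsub>G\<^esub> j \<otimes>\<^bsub>G\<^esub> ((d \<otimes>\<^bsub>G\<^esub> c [^]\<^bsub>G\<^esub> k) \<otimes>\<^bsub>G\<^esub> d [^]\<^bsub>G\<^esub> l))"
    using carr db by (simp add: G.m_assoc)
  also have "\<dots> = (a [^]\<^bsub>G\<^esub> i \<otimes>\<^bsub>G\<^esub> a [^]\<^bsub>G\<^esub> j) \<otimes>\<^bsub>G\<^esub> ((b [^]\<^bsub>G\<^esub> j \<otimes>\<^bsub>G\<^esub> b [^]\<^bsub>G\<^esub> k) \<otimes>\<^bsub>G\<^esub> (c [^]\<^bsub>G\<^esub> k \<otimes>\<^bsub>G\<^esub> (d \<otimes>\<^bsub>G\<^esub> d [^]\<^bsub>G\<^esub> l)))"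
    using carr dc by (simp add: G.m_assoc)
  also have "\<dots> = nf (i + j) (j + k) k (Suc l)"
    using carr by (simp add: nf_def G.nat_pow_mult G.pow_comm_self)
  finally show ?thesis .
qed

definition "Pset = {g \<in> carrier G. \<forall>i j k l. \<exists>i' j' k' l'. g \<otimes>\<^bsub>G\<^esub> nf i j k l = nf i' j' k' l'}"

lemma Pset_mult: "g \<in> Pset \<Longrightarrow> h \<in> Pset \<Longrightarrow> g \<otimes>\<^bsub>G\<^esub> h \<in> Pset"
  unfolding Pset_def
  by (auto simp: G.m_assoc nf_carrier) (metis G.m_assoc nf_carrier)

lemma Pset_gens: "a \<in> Pset" "b \<in> Pset" "c \<in> Pset" "d \<in> Pset"
  unfolding Pset_def using carr nf_a nf_b nf_c nf_d by blast+

lemma Pset_one: "\<one>\<^bsub>G\<^esub> \<in> Pset"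
  unfolding Pset_def using nf_carrier by auto

lemma Pset_pow: "g \<in> Pset \<Longrightarrow> g [^]\<^bsub>G\<^esub> (n::nat) \<in> Pset"
  by (induction n) (simp_all add: Pset_one Pset_mult)

lemma inv_gen: "g \<in> {a,b,c,d} \<Longrightarrow> inv\<^bsub>G\<^esub> g = g [^]\<^bsub>G\<^esub> (p - 1)"
proof -
  assume g: "g \<in> {a,b,c,d}"
  have gc: "g \<in> carrier G" and gp: "g [^]\<^bsub>G\<^esub> p = \<one>\<^bsub>G\<^esub>" using g carr relp by auto
  have "g [^]\<^bsub>G\<^esub> (p - 1) \<otimes>\<^bsub>G\<^esub> g = g [^]\<^bsub>G\<^esub> p"
    using gc p5 G.nat_pow_Suc[of g "p - 1"] by (simp add: Suc_diff_1)
  then show ?thesis using gc gp by (intro G.inv_equality) auto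
qed

lemma gen_sub_Pset: "generate G {a,b,c,d} \<subseteq> Pset"
proof
  fix x assume "x \<in> generate G {a,b,c,d}"
  then show "x \<in> Pset"
  proof (induction rule: generate.induct)
    case one then show ?case by (rule Pset_one)
  next
    case (incl h) then show ?case using Pset_gens by auto
  next
    case (inv h) then show ?case using Pset_gens Pset_pow inv_gen by auto
  next
    case (eng h1 h2) then show ?case using Pset_mult by blast
  qed
qed

lemma carrier_nf: "carrier G \<subseteq> (\<lambda>(i,j,k,l). nf i j k l) ` ({..<p} \<times> {..<p} \<times> {..<p} \<times> {..<p})"
proof
  fix g assume g: "g \<in> carrier G"
  then have "g \<in> generate G {a,b,c,d}" using pres by (simp add: is_G10_presentation_def)
  then have "g \<in> Pset" using gen_sub_Pset by auto
  then obtain i j k l where e: "g \<otimes>\<^bsub>G\<^esub> nf 0 0 0 0 = nf i j k l" unfolding Pset_def by blast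
  have "nf 0 0 0 0 = \<one>\<^bsub>G\<^esub>" by (simp add: nf_def)
  then have "g = nf i j k l" using e g by simp
  also have "\<dots> = nf (i mod p) (j mod p) (k mod p) (l mod p)"
    unfolding nf_def using carr relp G.pow_mod_exp by metis
  finally show "g \<in> (\<lambda>(i,j,k,l). nf i j k l) ` ({..<p} \<times> {..<p} \<times> {..<p} \<times> {..<p})"
    using p5 by (auto intro!: image_eqI[where x="(i mod p, j mod p, k mod p, l mod p)"])
qed

lemma card_G: "finite (carrier G) \<and> card (carrier G) \<le> p ^ 4"
proof -
  let ?S = "{..<p} \<times> {..<p} \<times> {..<p} \<times> {..<p}"
  have f: "finite ((\<lambda>(i,j,k,l). nf i j k l) ` ?S)" by simp
  have "card ((\<lambda>(i,j,k,l). nf i j k l) ` ?S) \<le> card ?S" by (rule card_image_le) simp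
  also have "card ?S = p ^ 4" by (simp add: card_cartesian_product power4_eq_xxxx)
  finally show ?thesis using carrier_nf f by (meson card_mono finite_subset order_trans)
qed

end



lemma Mmul_red: "red P u \<otimes>\<^bsub>Mgrp P\<^esub> red P v = red P (mm u v)"
  by (simp add: Mgrp_mult) (rule mm_resp; simp)

lemma gen_pow: "x \<in> generate G S \<Longrightarrow> x [^]\<^bsub>G\<^esub> (n::nat) \<in> generate G S"
  by (induction n) (auto intro: generate.one generate.eng)

lemma M_generated:
  assumes "p \<ge> 5" "odd p"
  shows "generate (Mgrp (int p)) {aM, bM, cM, dM} = carrier (Mgrp (int p))"
proof
  let ?M = "Mgrp (int p)"
  let ?P = "int p"
  have P: "?P > 0" "?P > 1" using assms by auto
  interpret M: group ?M using group_Mgrp[OF P(1)] .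
  have gc: "{aM, bM, cM, dM} \<subseteq> carrier ?M"
    using assms by (auto simp: aM_def bM_def cM_def dM_def Mgrp_carrier)
  show "generate ?M {aM, bM, cM, dM} \<subseteq> carrier ?M" by (rule M.generate_incl[OF gc])
  show "carrier ?M \<subseteq> generate ?M {aM, bM, cM, dM}"
  proof
    fix m assume m: "m \<in> carrier ?M"
    obtain x y z w where me: "m = (x,y,z,w)" by (cases m)
    have r: "0 \<le> x" "x < ?P" "0 \<le> y" "y < ?P" "0 \<le> z" "z < ?P" "0 \<le> w" "w < ?P"
      using m by (auto simp: me Mgrp_carrier)
    define i where "i = nat (((x - y) * ((?P + 1) div 2)) mod ?P)"
    have powa: "aM [^]\<^bsub>?M\<^esub> i = red ?P (2 * int i, 0, 0, 0)"
      using Mpow_N[OF P(1), of 2 0 0 i] gc by (simp add: aM_def mult.commute)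
    have powb: "bM [^]\<^bsub>?M\<^esub> nat y = red ?P (y, y, 0, 0)"
      using Mpow_N[OF P(1), of 1 1 0 "nat y"] gc r by (simp add: bM_def)
    have powc: "cM [^]\<^bsub>?M\<^esub> nat z = red ?P (0, 0, z, 0)"
      using Mpow_N[OF P(1), of 0 0 1 "nat z"] gc r by (simp add: cM_def)
    have powd: "dM [^]\<^bsub>?M\<^esub> nat w = red ?P (0, 0, 0, w)"
      using Mpow_d[OF P(2), of "nat w"] r by (simp add: dM_def)
    have e2: "2 * ((?P + 1) div 2) = ?P + 1" using assms by (auto elim!: oddE)
    have "(2 * int i + y) mod ?P = (2 * ((x - y) * ((?P + 1) div 2)) + y) mod ?P"
      unfolding i_def using P by simp (metis mod_add_left_eq mod_mult_right_eq)
    also have "2 * ((x - y) * ((?P + 1) div 2)) = (x - y) * (?P + 1)"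
      using e2 by (simp add: algebra_simps)
    also have "((x - y) * (?P + 1) + y) mod ?P = (x + (x - y) * ?P) mod ?P"
      by (simp add: algebra_simps)
    also have "\<dots> = x" using r by simp
    finally have ex: "(2 * int i + y) mod ?P = x" .
    have "aM [^]\<^bsub>?M\<^esub> i \<otimes>\<^bsub>?M\<^esub> (bM [^]\<^bsub>?M\<^esub> nat y \<otimes>\<^bsub>?M\<^esub> (cM [^]\<^bsub>?M\<^esub> nat z \<otimes>\<^bsub>?M\<^esub> dM [^]\<^bsub>?M\<^esub> nat w))
       = red ?P (2 * int i + y, y, z, w)"
      by (simp only: powa powb powc powd Mmul_red mm_simp) simp
    also have "\<dots> = m" using r ex by (simp add: me)
    finally have "m = aM [^]\<^bsub>?M\<^esub> i \<otimes>\<^bsub>?M\<^esub> (bM [^]\<^bsub>?M\<^esub> nat y \<otimes>\<^bsub>?M\<^esub> (cM [^]\<^bsub>?M\<^esub> nat z \<otimes>\<^bsub>?M\<^esub> dM [^]\<^bsub>?M\<^esub> nat w))" by simp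
    then show "m \<in> generate ?M {aM, bM, cM, dM}"
      by (metis gen_pow generate.eng generate.incl insertCI)
  qed
qed

lemma card_M: "card (carrier (Mgrp (int p))) = p ^ 4"
  by (simp add: Mgrp_carrier card_cartesian_product power4_eq_xxxx)

lemma finite_M: "finite (carrier (Mgrp (int p)))"
  by (simp add: Mgrp_carrier)

lemma G_iso_M:
  assumes pres: "is_G10_presentation G p a b c d" and p: "Factorial_Ring.prime p" "p \<ge> 5"
  shows "\<exists>h. h \<in> iso G (Mgrp (int p)) \<and> h d = dM"
proof -
  let ?M = "Mgrp (int p)"
  have P: "int p > 0" using p by auto
  interpret M: group ?M using group_Mgrp[OF P] .
  have G: "group G" using pres by (simp add: is_G10_presentation_def)
  interpret G: group G by fact
  have odd: "odd p" using p prime_odd_nat[of p] by auto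
  obtain h where h: "h \<in> hom G ?M" "h a = aM" "h b = bM" "h c = cM" "h d = dM"
    using G10_hom[OF pres M.group_axioms finite_M M_rel[OF p(2)]] by blast
  interpret gh: group_hom G ?M h using h(1) by (simp add: group_hom_def group_hom_axioms_def G M.group_axioms)
  have gc: "{a,b,c,d} \<subseteq> carrier G" using carr[OF pres p(2)] by auto
  have "h ` carrier G = h ` generate G {a,b,c,d}" using pres by (simp add: is_G10_presentation_def)
  also have "\<dots> = generate ?M (h ` {a,b,c,d})" by (rule gh.generate_img[OF gc, symmetric])
  also have "\<dots> = carrier ?M" using h M_generated[OF p(2) odd] by simp
  finally have surj: "h ` carrier G = carrier ?M" .
  have cg: "finite (carrier G)" "card (carrier G) \<le> p ^ 4" using card_G[OF pres p(2)] by auto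
  have "card (h ` carrier G) \<le> card (carrier G)" by (rule card_image_le[OF cg(1)])
  then have "card (h ` carrier G) = card (carrier G)" using surj card_M[of p] cg by simp
  then have "inj_on h (carrier G)" by (rule eq_card_imp_inj_on[OF cg(1)])
  then have "h \<in> iso G ?M" using h(1) surj by (simp add: iso_iff)
  then show ?thesis using h by blast
qed



lemma carrier_AutK: "carrier (AutK G K) = {\<theta> \<in> auto G. \<theta> ` K = K}"
  by (simp add: AutK_def AutoGroup_def)

lemma mult_AutK: "\<theta>1 \<in> auto G \<Longrightarrow> \<theta>2 \<in> auto G \<Longrightarrow>
   \<theta>1 \<otimes>\<^bsub>AutK G K\<^esub> \<theta>2 = compose (carrier G) \<theta>1 \<theta>2"
  by (simp add: AutK_def AutoGroup_def BijGroup_def auto_def)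

lemma conj_auto:
  assumes G: "group G" and M: "group M"
    and f: "f \<in> hom G M" and g: "g \<in> hom M G"
    and gf: "\<And>x. x \<in> carrier G \<Longrightarrow> g (f x) = x"
    and fg: "\<And>y. y \<in> carrier M \<Longrightarrow> f (g y) = y"
    and th: "\<theta> \<in> auto G" "\<theta> ` K = K" and K: "K \<subseteq> carrier G"
  shows "restrict (\<lambda>y. f (\<theta> (g y))) (carrier M) \<in> auto M"
    "restrict (\<lambda>y. f (\<theta> (g y))) (carrier M) ` (f ` K) = f ` K"
proof -
  interpret G: group G by fact
  interpret M: group M by fact
  let ?t = "restrict (\<lambda>y. f (\<theta> (g y))) (carrier M)"
  have thh: "\<theta> \<in> hom G G" and thb: "bij_betw \<theta> (carrier G) (carrier G)"
    using th by (auto simp: auto_def Bij_def)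
  have fc: "\<And>x. x \<in> carrier G \<Longrightarrow> f x \<in> carrier M" using f by (auto simp: hom_def)
  have gc: "\<And>x. x \<in> carrier M \<Longrightarrow> g x \<in> carrier G" using g by (auto simp: hom_def)
  have tc: "\<And>x. x \<in> carrier G \<Longrightarrow> \<theta> x \<in> carrier G" using thh by (auto simp: hom_def)
  have hom: "?t \<in> hom M M"
  proof (rule homI)
    fix x assume "x \<in> carrier M" then show "?t x \<in> carrier M" by (simp add: fc gc tc)
  next
    fix x y assume xy: "x \<in> carrier M" "y \<in> carrier M"
    then show "?t (x \<otimes>\<^bsub>M\<^esub> y) = ?t x \<otimes>\<^bsub>M\<^esub> ?t y"
      using f g thh by (simp add: hom_mult gc tc fc)
  qed
  have bij: "bij_betw ?t (carrier M) (carrier M)"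
  proof -
    have b1: "bij_betw g (carrier M) (carrier G)"
      by (rule bij_betw_byWitness[where f'=f]) (auto simp: gf fg gc fc)
    have b2: "bij_betw f (carrier G) (carrier M)"
      by (rule bij_betw_byWitness[where f'=g]) (auto simp: gf fg gc fc)
    have "bij_betw (f \<circ> (\<theta> \<circ> g)) (carrier M) (carrier M)"
      by (rule bij_betw_trans[OF bij_betw_trans[OF b1 thb] b2])
    then show ?thesis by (rule bij_betw_cong[THEN iffD1, rotated]) simp
  qed
  show "?t \<in> auto M" using hom bij by (simp add: auto_def Bij_def)
  have "?t ` (f ` K) = f ` \<theta> ` g ` f ` K" using K by (force simp: fc image_iff)
  also have "g ` f ` K = K" using K gf by force
  finally show "?t ` (f ` K) = f ` K" using th(2) by simp
qed

lemma AutK_transport: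
  assumes G: "group G" and M: "group M" and h: "h \<in> iso G M" and K: "K \<subseteq> carrier G"
  shows "AutK M (h ` K) \<cong> AutK G K"
proof -
  interpret G: group G by fact
  interpret M: group M by fact
  define hi where "hi = inv_into (carrier G) h"
  have hiso: "hi \<in> iso M G" unfolding hi_def by (rule G.iso_set_sym[OF h])
  have hh: "h \<in> hom G M" using h by (simp add: iso_def)
  have hih: "hi \<in> hom M G" using hiso by (simp add: iso_def)
  have bh: "bij_betw h (carrier G) (carrier M)" using h by (simp add: iso_def)
  have gf: "\<And>x. x \<in> carrier G \<Longrightarrow> hi (h x) = x"
    unfolding hi_def using bh by (simp add: bij_betw_def)
  have fg: "\<And>y. y \<in> carrier M \<Longrightarrow> h (hi y) = y"
    unfolding hi_def using bh by (simp add: bij_betw_def f_inv_into_f)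
  have hc: "\<And>x. x \<in> carrier G \<Longrightarrow> h x \<in> carrier M" using hh by (auto simp: hom_def)
  have hic: "\<And>x. x \<in> carrier M \<Longrightarrow> hi x \<in> carrier G" using hih by (auto simp: hom_def)
  have K': "h ` K \<subseteq> carrier M" using K hc by auto
  have KK: "hi ` h ` K = K" using K gf by force
  define \<tau> where "\<tau> = (\<lambda>\<theta>. restrict (\<lambda>x. hi (\<theta> (h x))) (carrier G))"
  define \<sigma> where "\<sigma> = (\<lambda>\<rho>. restrict (\<lambda>y. h (\<rho> (hi y))) (carrier M))"
  have tau_in: "\<tau> \<theta> \<in> carrier (AutK G K)" if "\<theta> \<in> carrier (AutK M (h ` K))" for \<theta>
  proof -
    have th: "\<theta> \<in> auto M" "\<theta> ` (h ` K) = h ` K" using that by (auto simp: carrier_AutK)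
    show ?thesis
      using conj_auto[OF M G hih hh fg gf th K'] KK by (simp add: carrier_AutK \<tau>_def)
  qed
  have sigma_in: "\<sigma> \<rho> \<in> carrier (AutK M (h ` K))" if "\<rho> \<in> carrier (AutK G K)" for \<rho>
  proof -
    have th: "\<rho> \<in> auto G" "\<rho> ` K = K" using that by (auto simp: carrier_AutK)
    show ?thesis
      using conj_auto[OF G M hh hih gf fg th K] by (simp add: carrier_AutK \<sigma>_def)
  qed
  have autoc: "\<And>\<theta> x. \<theta> \<in> auto M \<Longrightarrow> x \<in> carrier M \<Longrightarrow> \<theta> x \<in> carrier M"
    by (auto simp: auto_def hom_def)
  have autoe: "\<And>\<theta>. \<theta> \<in> auto M \<Longrightarrow> \<theta> \<in> extensional (carrier M)"
    by (auto simp: auto_def Bij_def)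
  have autoeG: "\<And>\<theta>. \<theta> \<in> auto G \<Longrightarrow> \<theta> \<in> extensional (carrier G)"
    by (auto simp: auto_def Bij_def)
  have autocG: "\<And>\<theta> x. \<theta> \<in> auto G \<Longrightarrow> x \<in> carrier G \<Longrightarrow> \<theta> x \<in> carrier G"
    by (auto simp: auto_def hom_def)
  have "\<tau> \<in> iso (AutK M (h ` K)) (AutK G K)"
  proof (rule isoI)
    show "\<tau> \<in> hom (AutK M (h ` K)) (AutK G K)"
    proof (rule homI)
      fix \<theta> assume "\<theta> \<in> carrier (AutK M (h ` K))"
      then show "\<tau> \<theta> \<in> carrier (AutK G K)" by (rule tau_in)
    next
      fix \<theta>1 \<theta>2 assume t: "\<theta>1 \<in> carrier (AutK M (h ` K))" "\<theta>2 \<in> carrier (AutK M (h ` K))"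
      have a: "\<theta>1 \<in> auto M" "\<theta>2 \<in> auto M" using t by (auto simp: carrier_AutK)
      have b: "\<tau> \<theta>1 \<in> auto G" "\<tau> \<theta>2 \<in> auto G" using tau_in[OF t(1)] tau_in[OF t(2)]
        by (auto simp: carrier_AutK)
      show "\<tau> (\<theta>1 \<otimes>\<^bsub>AutK M (h ` K)\<^esub> \<theta>2) = \<tau> \<theta>1 \<otimes>\<^bsub>AutK G K\<^esub> \<tau> \<theta>2"
        unfolding mult_AutK[OF a] mult_AutK[OF b]
        by (rule ext) (simp add: \<tau>_def compose_def hc fg autoc[OF a(2)] hic autocG)
    qed
  next
    show "bij_betw \<tau> (carrier (AutK M (h ` K))) (carrier (AutK G K))"
    proof (rule bij_betw_byWitness[where f'=\<sigma>])
      show "\<forall>\<theta>\<in>carrier (AutK M (h ` K)). \<sigma> (\<tau> \<theta>) = \<theta>"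
      proof
        fix \<theta> assume "\<theta> \<in> carrier (AutK M (h ` K))"
        then have a: "\<theta> \<in> auto M" by (simp add: carrier_AutK)
        show "\<sigma> (\<tau> \<theta>) = \<theta>"
        proof (rule extensionalityI[OF _ autoe[OF a]])
          show "\<sigma> (\<tau> \<theta>) \<in> extensional (carrier M)" by (simp add: \<sigma>_def)
          fix y assume "y \<in> carrier M"
          then show "\<sigma> (\<tau> \<theta>) y = \<theta> y" by (simp add: \<sigma>_def \<tau>_def hic fg autoc[OF a])
        qed
      qed
      show "\<forall>\<rho>\<in>carrier (AutK G K). \<tau> (\<sigma> \<rho>) = \<rho>"
      proof
        fix \<rho> assume "\<rho> \<in> carrier (AutK G K)"
        then have a: "\<rho> \<in> auto G" by (simp add: carrier_AutK)
        show "\<tau> (\<sigma> \<rho>) = \<rho>"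
        proof (rule extensionalityI[OF _ autoeG[OF a]])
          show "\<tau> (\<sigma> \<rho>) \<in> extensional (carrier G)" by (simp add: \<tau>_def)
          fix x assume "x \<in> carrier G"
          then show "\<tau> (\<sigma> \<rho>) x = \<rho> x" by (simp add: \<sigma>_def \<tau>_def hc gf autocG[OF a])
        qed
      qed
      show "\<tau> ` carrier (AutK M (h ` K)) \<subseteq> carrier (AutK G K)" using tau_in by blast
      show "\<sigma> ` carrier (AutK G K) \<subseteq> carrier (AutK M (h ` K))" using sigma_in by blast
    qed
  qed
  then show ?thesis by (rule is_isoI)
qed



definition Fe :: "int \<Rightarrow> int \<Rightarrow> int \<Rightarrow> int \<Rightarrow> q4 \<Rightarrow> q4" where
  "Fe k z u v = (\<lambda>(x1,y1,z1,w1). (k^2*z*x1 + 2*k*(z*u)*y1 + z*(v + u^2)*z1, k*z*y1 + z*u*z1, z*z1, k*w1))"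

lemma Fe_simp[simp]: "Fe k z u v (x1,y1,z1,w1) = (k^2*z*x1 + 2*k*(z*u)*y1 + z*(v + u^2)*z1, k*z*y1 + z*u*z1, z*z1, k*w1)"
  by (simp add: Fe_def)

lemma Fe_resp:
  assumes "red P m = red P m'" "[k = ki] (mod P)" "[z = zi] (mod P)" "[u = u'] (mod P)" "[v = v'] (mod P)"
  shows "red P (Fe k z u v m) = red P (Fe ki zi u' v' m')"
  using assms
  apply (cases m; cases m')
  apply (simp only: red_eq_iff Fe_simp)
  apply (intro conjI cong_add cong_mult cong_pow cong_refl; simp)
  done

lemma Fe_hom: "Fe k z u v (mm m1 m2) = mm (Fe k z u v m1) (Fe k z u v m2)"
  by (cases m1; cases m2) (simp add: algebra_simps power2_eq_square)

lemma Fe_comp: "Fe k1 z1 u1 v1 (Fe k2 z2 u2 v2 m) = Fe (k1*k2) (z1*z2) (u1 + k1*u2) (v1 + k1^2*v2) m"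
  by (cases m) (simp add: algebra_simps power2_eq_square)

lemma Fe_id: "Fe 1 1 0 0 m = m"
  by (cases m) simp

definition KM :: "int \<Rightarrow> q4 set" where "KM P = {(0,0,0,w) | w. 0 \<le> w \<and> w < P}"

lemma KM_gen:
  assumes "P > 1"
  shows "generate (Mgrp P) {dM} = KM P"
proof
  interpret M: group "Mgrp P" using group_Mgrp assms by simp
  have dc: "dM \<in> carrier (Mgrp P)" using assms by (simp add: dM_def Mgrp_carrier)
  have sub: "subgroup (KM P) (Mgrp P)"
  proof (rule M.subgroupI)
    show "KM P \<subseteq> carrier (Mgrp P)" by (auto simp: KM_def Mgrp_carrier)
    show "KM P \<noteq> {}" using assms by (auto simp: KM_def)
    fix x assume x: "x \<in> KM P"
    then obtain w where xw: "x = (0,0,0,w)" "0 \<le> w" "w < P" by (auto simp: KM_def)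
    have "red P (0,0,0,-w) \<otimes>\<^bsub>Mgrp P\<^esub> x = \<one>\<^bsub>Mgrp P\<^esub>"
      using xw by (simp add: Mgrp_mult Mgrp_one mod_add_left_eq)
    then have "inv\<^bsub>Mgrp P\<^esub> x = red P (0,0,0,-w)"
      using x \<open>KM P \<subseteq> carrier (Mgrp P)\<close> assms by (intro M.inv_equality) (auto simp: Mgrp_carrier)
    then show "inv\<^bsub>Mgrp P\<^esub> x \<in> KM P" using assms by (simp add: KM_def)
  next
    fix x y assume "x \<in> KM P" "y \<in> KM P"
    then show "x \<otimes>\<^bsub>Mgrp P\<^esub> y \<in> KM P" using assms by (auto simp: KM_def Mgrp_mult)
  qed
  show "generate (Mgrp P) {dM} \<subseteq> KM P"
    by (rule M.generate_subgroup_incl[OF _ sub]) (simp add: KM_def dM_def, use assms in auto)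
  show "KM P \<subseteq> generate (Mgrp P) {dM}"
  proof
    fix x assume "x \<in> KM P"
    then obtain w where xw: "x = (0,0,0,w)" "0 \<le> w" "w < P" by (auto simp: KM_def)
    have "dM [^]\<^bsub>Mgrp P\<^esub> nat w = x" using Mpow_d[OF assms, of "nat w"] xw by (simp add: dM_def)
    then show "x \<in> generate (Mgrp P) {dM}" by (metis gen_pow generate.incl singletonI)
  qed
qed

definition psi :: "int \<Rightarrow> int \<Rightarrow> int \<Rightarrow> int \<Rightarrow> int \<Rightarrow> q4 \<Rightarrow> q4" where
  "psi P k z u v = restrict (\<lambda>m. red P (Fe k z u v m)) (carrier (Mgrp P))"

lemma psi_hom:
  assumes "P > 0"
  shows "psi P k z u v \<in> hom (Mgrp P) (Mgrp P)"
proof (rule homI)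
  fix x assume "x \<in> carrier (Mgrp P)"
  then show "psi P k z u v x \<in> carrier (Mgrp P)" using assms by (simp add: psi_def red_in_carrier)
next
  fix x y assume xy: "x \<in> carrier (Mgrp P)" "y \<in> carrier (Mgrp P)"
  then have xyc: "x \<otimes>\<^bsub>Mgrp P\<^esub> y \<in> carrier (Mgrp P)" using assms by (simp add: Mgrp_mult red_in_carrier)
  have "psi P k z u v (x \<otimes>\<^bsub>Mgrp P\<^esub> y) = red P (Fe k z u v (red P (mm x y)))"
    using xyc by (simp add: psi_def Mgrp_mult)
  also have "\<dots> = red P (Fe k z u v (mm x y))" by (rule Fe_resp) simp_all
  also have "\<dots> = red P (mm (Fe k z u v x) (Fe k z u v y))" by (simp add: Fe_hom)
  also have "\<dots> = red P (mm (red P (Fe k z u v x)) (red P (Fe k z u v y)))" by (rule mm_resp) simp_all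
  also have "\<dots> = psi P k z u v x \<otimes>\<^bsub>Mgrp P\<^esub> psi P k z u v y"
    using xy by (simp add: psi_def Mgrp_mult)
  finally show "psi P k z u v (x \<otimes>\<^bsub>Mgrp P\<^esub> y) = psi P k z u v x \<otimes>\<^bsub>Mgrp P\<^esub> psi P k z u v y" .
qed

lemma psi_inj:
  assumes "P > 0" "coprime k P" "coprime z P"
  shows "inj_on (psi P k z u v) (carrier (Mgrp P))"
proof -
  obtain ki where ki: "[k * ki = 1] (mod P)" using cong_solve_coprime_int[OF assms(2)] by blast
  obtain zi where zi: "[z * zi = 1] (mod P)" using cong_solve_coprime_int[OF assms(3)] by blast
  have inv: "red P (Fe ki zi (- ki * u) (- (ki^2) * v) (psi P k z u v m)) = m" if m: "m \<in> carrier (Mgrp P)" for m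
  proof -
    have "red P (Fe ki zi (- ki * u) (- (ki^2) * v) (psi P k z u v m))
        = red P (Fe ki zi (- ki * u) (- (ki^2) * v) (Fe k z u v m))"
      using m by (simp add: psi_def) (rule Fe_resp; simp)
    also have "\<dots> = red P (Fe (ki*k) (zi*z) (- ki * u + ki * u) (- (ki^2) * v + ki^2 * v) m)"
      by (simp add: Fe_comp)
    also have "\<dots> = red P (Fe 1 1 0 0 m)"
      by (rule Fe_resp) (use ki zi in \<open>simp_all add: mult.commute\<close>)
    also have "\<dots> = m" using m by (simp add: Fe_id red_carrier)
    finally show ?thesis .
  qed
  show ?thesis by (rule inj_on_inverseI[where g="\<lambda>m. red P (Fe ki zi (- ki * u) (- (ki^2) * v) m)"]) (rule inv)
qed

lemma psi_auto:
  assumes "P > 1" "coprime k P" "coprime z P"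
  shows "psi P k z u v \<in> auto (Mgrp P)" "psi P k z u v ` KM P = KM P"
proof -
  have P0: "P > 0" using assms by simp
  have inj: "inj_on (psi P k z u v) (carrier (Mgrp P))" by (rule psi_inj[OF P0 assms(2,3)])
  have h: "psi P k z u v \<in> hom (Mgrp P) (Mgrp P)" by (rule psi_hom[OF P0])
  have sub: "psi P k z u v ` carrier (Mgrp P) \<subseteq> carrier (Mgrp P)" using h by (auto simp: hom_def)
  have "psi P k z u v ` carrier (Mgrp P) = carrier (Mgrp P)"
    by (rule endo_inj_surj[OF _ sub inj]) (simp add: Mgrp_carrier)
  then have "bij_betw (psi P k z u v) (carrier (Mgrp P)) (carrier (Mgrp P))"
    using inj by (simp add: bij_betw_def)
  then show "psi P k z u v \<in> auto (Mgrp P)" using h by (simp add: auto_def Bij_def psi_def)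
  have KMc: "KM P \<subseteq> carrier (Mgrp P)" by (auto simp: KM_def Mgrp_carrier)
  have subK: "psi P k z u v ` KM P \<subseteq> KM P"
  proof
    fix y assume "y \<in> psi P k z u v ` KM P"
    then obtain w where "y = psi P k z u v (0,0,0,w)" "0 \<le> w" "w < P" by (auto simp: KM_def)
    then show "y \<in> KM P" using P0 by (simp add: psi_def Mgrp_carrier KM_def)
  qed
  show "psi P k z u v ` KM P = KM P"
    by (rule endo_inj_surj[OF _ subK inj_on_subset[OF inj KMc]]) (simp add: KM_def)
qed



lemma hom_agree_gen:
  assumes M: "group M" and h1: "\<theta>1 \<in> hom M N" and h2: "\<theta>2 \<in> hom M N" and N: "group N"
    and S: "S \<subseteq> carrier M" and eq: "\<And>s. s \<in> S \<Longrightarrow> \<theta>1 s = \<theta>2 s"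
    and x: "x \<in> generate M S"
  shows "\<theta>1 x = \<theta>2 x"
  using x
proof (induction rule: generate.induct)
  interpret g1: group_hom M N \<theta>1 using M N h1 by (simp add: group_hom_def group_hom_axioms_def)
  interpret g2: group_hom M N \<theta>2 using M N h2 by (simp add: group_hom_def group_hom_axioms_def)
  case one then show ?case by simp
next
  case (incl h) then show ?case by (rule eq)
next
  interpret g1: group_hom M N \<theta>1 using M N h1 by (simp add: group_hom_def group_hom_axioms_def)
  interpret g2: group_hom M N \<theta>2 using M N h2 by (simp add: group_hom_def group_hom_axioms_def)
  case (inv h) then show ?case using S eq by (auto simp: g1.hom_inv g2.hom_inv)
next
  interpret g1: group_hom M N \<theta>1 using M N h1 by (simp add: group_hom_def group_hom_axioms_def)
  interpret g2: group_hom M N \<theta>2 using M N h2 by (simp add: group_hom_def group_hom_axioms_def)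
  interpret M: group M by fact
  case (eng h1 h2)
  have c: "h1 \<in> carrier M" "h2 \<in> carrier M" using eng.hyps S group.generate_in_carrier[OF M] by auto
  then show ?case using eng.IH by simp
qed

lemma gens_image:
  assumes p: "p \<ge> 5" and P: "P = int p"
    and h: "\<theta> \<in> hom (Mgrp P) (Mgrp P)"
    and td: "\<theta> dM = red P (0,0,0,k)" and tc: "\<theta> cM = red P (x,y,z,w)"
  shows "\<theta> bM = red P (2*k*y + k^2*z, k*z, 0, 0)"
    "\<theta> aM = red P (2*k^2*z, 0, 0, 0)"
    "[2*w*(k*z) = 0] (mod P)"
proof -
  have P0: "P > 0" using p P by simp
  let ?M = "Mgrp P"
  interpret M: group ?M using group_Mgrp[OF P0] .
  have rel: "G10_relations ?M p aM bM cM dM" using M_rel[OF p] P by simp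
  have c: "aM \<in> carrier ?M" "bM \<in> carrier ?M" "cM \<in> carrier ?M" "dM \<in> carrier ?M"
    using rel by (auto simp: G10_relations_def)
  have hc: "\<And>m. m \<in> carrier ?M \<Longrightarrow> \<theta> m \<in> carrier ?M" using h by (auto simp: hom_def)
  have hm: "\<And>m n. m \<in> carrier ?M \<Longrightarrow> n \<in> carrier ?M \<Longrightarrow> \<theta> (m \<otimes>\<^bsub>?M\<^esub> n) = \<theta> m \<otimes>\<^bsub>?M\<^esub> \<theta> n"
    using h by (auto simp: hom_def)
  have r1: "dM \<otimes>\<^bsub>?M\<^esub> cM = bM \<otimes>\<^bsub>?M\<^esub> cM \<otimes>\<^bsub>?M\<^esub> dM"
   and r2: "dM \<otimes>\<^bsub>?M\<^esub> bM = aM \<otimes>\<^bsub>?M\<^esub> bM \<otimes>\<^bsub>?M\<^esub> dM"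
   and r3: "bM \<otimes>\<^bsub>?M\<^esub> cM = cM \<otimes>\<^bsub>?M\<^esub> bM"
    using rel by (simp_all add: G10_relations_def)
  define B0 where "B0 = red P (2*k*y + k^2*z, k*z, 0, 0)"
  define A0 where "A0 = red P (2*k^2*z, 0, 0, 0)"
  have B0c: "B0 \<in> carrier ?M" "A0 \<in> carrier ?M" unfolding B0_def A0_def using P0 by (simp_all add: Mgrp_carrier)
  have "\<theta> dM \<otimes>\<^bsub>?M\<^esub> \<theta> cM = \<theta> bM \<otimes>\<^bsub>?M\<^esub> \<theta> cM \<otimes>\<^bsub>?M\<^esub> \<theta> dM"
    using r1 c by (metis hm M.m_closed)
  moreover have "\<theta> dM \<otimes>\<^bsub>?M\<^esub> \<theta> cM = B0 \<otimes>\<^bsub>?M\<^esub> \<theta> cM \<otimes>\<^bsub>?M\<^esub> \<theta> dM"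
  proof -
    have "\<theta> dM \<otimes>\<^bsub>?M\<^esub> \<theta> cM = red P (mm (0,0,0,k) (x,y,z,w))" by (simp only: td tc Mmul_red)
    also have "\<dots> = red P (mm (mm (2*k*y + k^2*z, k*z, 0, 0) (x,y,z,w)) (0,0,0,k))"
      by (simp add: algebra_simps)
    also have "\<dots> = B0 \<otimes>\<^bsub>?M\<^esub> \<theta> cM \<otimes>\<^bsub>?M\<^esub> \<theta> dM" by (simp only: td tc B0_def Mmul_red)
    finally show ?thesis .
  qed
  ultimately have "\<theta> bM \<otimes>\<^bsub>?M\<^esub> (\<theta> cM \<otimes>\<^bsub>?M\<^esub> \<theta> dM) = B0 \<otimes>\<^bsub>?M\<^esub> (\<theta> cM \<otimes>\<^bsub>?M\<^esub> \<theta> dM)"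
    using c B0c hc by (simp add: M.m_assoc)
  then show tb: "\<theta> bM = red P (2*k*y + k^2*z, k*z, 0, 0)"
    using c B0c hc unfolding B0_def[symmetric] by (simp add: M.right_cancel)
  have "\<theta> dM \<otimes>\<^bsub>?M\<^esub> \<theta> bM = \<theta> aM \<otimes>\<^bsub>?M\<^esub> \<theta> bM \<otimes>\<^bsub>?M\<^esub> \<theta> dM"
    using r2 c by (metis hm M.m_closed)
  moreover have "\<theta> dM \<otimes>\<^bsub>?M\<^esub> \<theta> bM = A0 \<otimes>\<^bsub>?M\<^esub> \<theta> bM \<otimes>\<^bsub>?M\<^esub> \<theta> dM"
  proof -
    have "\<theta> dM \<otimes>\<^bsub>?M\<^esub> \<theta> bM = red P (mm (0,0,0,k) (2*k*y + k^2*z, k*z, 0, 0))" by (simp only: td tb Mmul_red)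
    also have "\<dots> = red P (mm (mm (2*k^2*z, 0, 0, 0) (2*k*y + k^2*z, k*z, 0, 0)) (0,0,0,k))"
      by (simp add: algebra_simps power2_eq_square)
    also have "\<dots> = A0 \<otimes>\<^bsub>?M\<^esub> \<theta> bM \<otimes>\<^bsub>?M\<^esub> \<theta> dM" by (simp only: td tb A0_def Mmul_red)
    finally show ?thesis .
  qed
  ultimately have "\<theta> aM \<otimes>\<^bsub>?M\<^esub> (\<theta> bM \<otimes>\<^bsub>?M\<^esub> \<theta> dM) = A0 \<otimes>\<^bsub>?M\<^esub> (\<theta> bM \<otimes>\<^bsub>?M\<^esub> \<theta> dM)"
    using c B0c hc by (simp add: M.m_assoc)
  then show "\<theta> aM = red P (2*k^2*z, 0, 0, 0)"
    using c B0c hc unfolding A0_def[symmetric] by (simp add: M.right_cancel)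
  have "\<theta> bM \<otimes>\<^bsub>?M\<^esub> \<theta> cM = \<theta> cM \<otimes>\<^bsub>?M\<^esub> \<theta> bM"
    using r3 c by (metis hm)
  then have "red P (mm (2*k*y + k^2*z, k*z, 0, 0) (x,y,z,w)) = red P (mm (x,y,z,w) (2*k*y + k^2*z, k*z, 0, 0))"
    by (simp only: tb tc Mmul_red)
  then have "[2*k*y + k^2*z + x = x + (2*k*y + k^2*z) + 2*w*(k*z)] (mod P)"
    by (simp only: mm_simp red_eq_iff) (simp add: algebra_simps)
  then show "[2*w*(k*z) = 0] (mod P)"
    by (simp add: cong_iff_dvd_diff algebra_simps)
qed



lemma AutK_M_char:
  assumes p: "Factorial_Ring.prime p" "p \<ge> 5" and P: "P = int p"
    and th: "\<theta> \<in> carrier (AutK (Mgrp P) (KM P))"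
  shows "\<exists>k x y z. \<theta> dM = (0,0,0,k) \<and> \<theta> cM = (x,y,z,0) \<and>
           0 \<le> k \<and> k < P \<and> 0 \<le> x \<and> x < P \<and> 0 \<le> y \<and> y < P \<and> 0 \<le> z \<and> z < P \<and>
           \<not> P dvd k \<and> \<not> P dvd z"
proof -
  let ?M = "Mgrp P"
  have P1: "P > 1" using p P by simp
  have P5: "P \<ge> 5" using p P by simp
  have Pp: "Factorial_Ring.prime P" using p P by simp
  interpret M: group ?M using group_Mgrp P1 by simp
  have a: "\<theta> \<in> auto ?M" "\<theta> ` KM P = KM P" using th by (auto simp: carrier_AutK)
  have h: "\<theta> \<in> hom ?M ?M" and bij: "bij_betw \<theta> (carrier ?M) (carrier ?M)"
    using a by (auto simp: auto_def Bij_def)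
  interpret gh: group_hom ?M ?M \<theta> using h by (simp add: group_hom_def group_hom_axioms_def M.group_axioms)
  have "dM \<in> KM P" using P1 by (simp add: dM_def KM_def)
  then have "\<theta> dM \<in> KM P" using a by blast
  then obtain k where k: "\<theta> dM = (0,0,0,k)" "0 \<le> k" "k < P" by (auto simp: KM_def)
  have cc: "cM \<in> carrier ?M" using P1 by (simp add: cM_def Mgrp_carrier)
  then have "\<theta> cM \<in> carrier ?M" by simp
  then obtain x y z w where c: "\<theta> cM = (x,y,z,w)" and r: "0 \<le> x" "x < P" "0 \<le> y" "y < P"
     "0 \<le> z" "z < P" "0 \<le> w" "w < P"
    by (cases "\<theta> cM") (auto simp: Mgrp_carrier)
  have td: "\<theta> dM = red P (0,0,0,k)" using k by simp
  have tc: "\<theta> cM = red P (x,y,z,w)" using c r by simp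
  note gi = gens_image[OF p(2) P h td tc]
  have ac: "aM \<in> carrier ?M" using P5 by (simp add: aM_def Mgrp_carrier)
  have "aM \<noteq> \<one>\<^bsub>?M\<^esub>" by (simp add: aM_def Mgrp_one)
  then have "\<theta> aM \<noteq> \<theta> \<one>\<^bsub>?M\<^esub>" using bij ac by (auto simp: bij_betw_def inj_on_def)
  moreover have t1: "\<theta> (0,0,0,0) = (0,0,0,0)" using gh.hom_one by (simp add: Mgrp_one)
  ultimately have "red P (2*k^2*z, 0, 0, 0) \<noteq> (0,0,0,0)" using gi(2) by (simp add: Mgrp_one)
  then have nd: "\<not> P dvd (2*k^2*z)" by (auto simp: dvd_eq_mod_eq_0)
  have nk: "\<not> P dvd k" using nd by (metis dvd_mult dvd_mult2 power2_eq_square)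
  have nz: "\<not> P dvd z" using nd by (metis dvd_mult)
  have n2: "\<not> P dvd 2" using P1 p(2) P by (auto dest: zdvd_imp_le)
  have "P dvd 2*w*(k*z)" using gi(3) by (simp add: cong_0_iff)
  then have "P dvd w" using Pp nk nz n2 by (auto simp: prime_dvd_mult_iff)
  then have "w mod P = 0" by simp
  then have "w = 0" using r by simp
  then show ?thesis using k c r nk nz by blast
qed



lemma prime_cop: "Factorial_Ring.prime (P::int) \<Longrightarrow> \<not> P dvd k \<Longrightarrow> coprime k P"
  using prime_imp_coprime[of P k] by (simp add: coprime_commute)

context
  fixes p gn :: nat
  assumes pp: "Factorial_Ring.prime p" and p5: "p \<ge> 5" and gr: "residue_primroot p gn"
begin

lemma Pprime: "Factorial_Ring.prime (int p)" using pp by simp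

lemma g_nd: "\<not> int p dvd int gn ^ n"
proof
  assume "int p dvd int gn ^ n"
  then have "int p dvd int gn" using prime_dvd_power[OF Pprime] by blast
  then have "p dvd gn" by simp
  moreover have "coprime p gn" using gr by (simp add: residue_primroot_def)
  ultimately have "is_unit p" by (metis coprime_common_divisor dvd_refl)
  then show False using p5 by simp
qed

lemma g_fermat: "[int gn ^ (p - 1) = 1] (mod int p)"
proof -
  have "\<not> p dvd gn" using g_nd[of 1] by simp
  then have "[gn ^ (p - 1) = 1] (mod p)" by (rule fermat_theorem[OF pp])
  then show ?thesis by (metis cong_int_iff of_nat_1 of_nat_power)
qed

lemma g_pow_mod: "[int gn ^ n = int gn ^ (n mod (p - 1))] (mod int p)"
proof -
  have "int gn ^ n = (int gn ^ (p - 1)) ^ (n div (p - 1)) * int gn ^ (n mod (p - 1))"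
    by (simp add: power_mult[symmetric] power_add[symmetric])
  also have "[\<dots> = 1 ^ (n div (p - 1)) * int gn ^ (n mod (p - 1))] (mod int p)"
    by (intro cong_mult cong_pow g_fermat cong_refl)
  finally show ?thesis by simp
qed

lemma g_gen: "bij_betw (\<lambda>i. gn ^ i mod p) {..<p - 1} (totatives p)"
  using residue_primroot_is_generator[of p gn] gr p5 totient_prime[OF pp] by simp

lemma g_inj:
  assumes "i < p - 1" "j < p - 1" "[int gn ^ i = int gn ^ j] (mod int p)"
  shows "i = j"
proof -
  have "[gn ^ i = gn ^ j] (mod p)" using assms(3) by (metis cong_int_iff of_nat_power)
  then have "gn ^ i mod p = gn ^ j mod p" by (simp add: cong_def)
  then show ?thesis using g_gen assms(1,2) by (auto simp: bij_betw_def inj_on_def)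
qed

lemma g_surj:
  assumes "\<not> int p dvd k"
  shows "\<exists>i < p - 1. [int gn ^ i = k] (mod int p)"
proof -
  have P0: "int p > 0" using p5 by simp
  define m where "m = nat (k mod int p)"
  have m0: "int m = k mod int p" unfolding m_def using P0 by simp
  have "k mod int p \<noteq> 0" using assms by (simp add: dvd_eq_mod_eq_0)
  moreover have "k mod int p < int p" using P0 by simp
  ultimately have "int m > 0" "int m < int p" using m0 by auto
  then have "m > 0" "m \<le> p" by auto
  moreover have "coprime m p"
  proof -
    have "\<not> p dvd m"
    proof
      assume "p dvd m"
      then have "int p dvd int m" by simp
      then have "int p dvd k" using m0 by (simp add: dvd_mod_iff)
      then show False using assms by simp
    qed
    then show ?thesis using prime_imp_coprime[OF pp] by (simp add: coprime_commute)
  qed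
  ultimately have "m \<in> totatives p" by (simp add: totatives_def)
  then have "m \<in> (\<lambda>i. gn ^ i mod p) ` {..<p - 1}" using g_gen by (simp add: bij_betw_def)
  then obtain i where i: "i < p - 1" "gn ^ i mod p = m" by auto
  then have "[gn ^ i = m] (mod p)" by (metis cong_def mod_mod_trivial)
  then have "[int gn ^ i = int m] (mod int p)" by (metis cong_int_iff of_nat_power)
  then have "[int gn ^ i = k] (mod int p)" using m0 by (simp add: cong_def)
  then show ?thesis using i by blast
qed

end



definition phi :: "int \<Rightarrow> nat \<Rightarrow> int \<Rightarrow> int \<times> int \<Rightarrow> int \<times> int" where
  "phi g p t = restrict (\<lambda>uv. ((g ^ nat t * fst uv) mod int p, ((g ^ nat t)^2 * snd uv) mod int p))
     (carrier (integer_mod_group p \<times>\<times> integer_mod_group p))"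

definition Tgrp :: "int \<Rightarrow> nat \<Rightarrow> (int \<times> (int \<times> int) \<times> int) monoid" where
  "Tgrp g p = integer_mod_group (p - 1) \<times>\<times>
     semidirect_product (integer_mod_group p \<times>\<times> integer_mod_group p) (integer_mod_group (p - 1)) (phi g p)"

definition Psi :: "int \<Rightarrow> nat \<Rightarrow> int \<times> (int \<times> int) \<times> int \<Rightarrow> q4 \<Rightarrow> q4" where
  "Psi g p \<tau> = psi (int p) (g ^ nat (snd (snd \<tau>))) (g ^ nat (fst \<tau>)) (fst (fst (snd \<tau>))) (snd (fst (snd \<tau>)))"

lemma carrier_sdp: "carrier (semidirect_product N H \<phi>) = carrier N \<times> carrier H"
  by (simp add: semidirect_product_def)

lemma mult_sdp: "(n, h) \<otimes>\<^bsub>semidirect_product N H \<phi>\<^esub> (n', h') = (n \<otimes>\<^bsub>N\<^esub> \<phi> h n', h \<otimes>\<^bsub>H\<^esub> h')"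
  by (simp add: semidirect_product_def)

lemma carrier_T:
  assumes "p \<ge> 5"
  shows "carrier (Tgrp g p) = {0..<int (p - 1)} \<times> (({0..<int p} \<times> {0..<int p}) \<times> {0..<int (p - 1)})"
  using assms by (simp add: Tgrp_def carrier_sdp carrier_integer_mod_group)

lemma mult_T:
  assumes "p \<ge> 5" "0 \<le> u2" "u2 < int p" "0 \<le> v2" "v2 < int p"
  shows "(s1, ((u1, v1), t1)) \<otimes>\<^bsub>Tgrp g p\<^esub> (s2, ((u2, v2), t2)) =
    ((s1 + s2) mod int (p - 1),
     (((u1 + (g ^ nat t1 * u2) mod int p) mod int p, (v1 + ((g ^ nat t1)^2 * v2) mod int p) mod int p),
      (t1 + t2) mod int (p - 1)))"
  using assms by (simp add: Tgrp_def mult_sdp phi_def carrier_integer_mod_group)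

lemma T_closed:
  assumes "p \<ge> 5" "x \<in> carrier (Tgrp g p)" "y \<in> carrier (Tgrp g p)"
  shows "x \<otimes>\<^bsub>Tgrp g p\<^esub> y \<in> carrier (Tgrp g p)"
proof -
  obtain s1 u1 v1 t1 where x: "x = (s1, ((u1, v1), t1))" by (metis prod.collapse)
  obtain s2 u2 v2 t2 where y: "y = (s2, ((u2, v2), t2))" by (metis prod.collapse)
  show ?thesis using assms unfolding x y
    by (subst mult_T) (auto simp: carrier_T)
qed

lemma iso_sym_closed:
  assumes h: "h \<in> iso A B" and cl: "\<And>x y. x \<in> carrier A \<Longrightarrow> y \<in> carrier A \<Longrightarrow> x \<otimes>\<^bsub>A\<^esub> y \<in> carrier A"
  shows "B \<cong> A"
proof -
  have hh: "h \<in> hom A B" and bh: "bij_betw h (carrier A) (carrier B)" using h by (auto simp: iso_def)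
  have HG: "bij_betw (inv_into (carrier A) h) (carrier B) (carrier A)" by (rule bij_betw_inv_into[OF bh])
  have "inv_into (carrier A) h \<in> hom B A"
    unfolding hom_def
  proof safe
    show *: "\<And>x. x \<in> carrier B \<Longrightarrow> inv_into (carrier A) h x \<in> carrier A"
      by (meson HG bij_betwE)
    show "inv_into (carrier A) h (x \<otimes>\<^bsub>B\<^esub> y) = inv_into (carrier A) h x \<otimes>\<^bsub>A\<^esub> inv_into (carrier A) h y"
      if "x \<in> carrier B" "y \<in> carrier B" for x y
    proof (rule inv_into_f_eq)
      show "inj_on h (carrier A)" using bh by (simp add: bij_betw_def)
      show "inv_into (carrier A) h x \<otimes>\<^bsub>A\<^esub> inv_into (carrier A) h y \<in> carrier A"
        by (simp add: * that cl)
      show "h (inv_into (carrier A) h x \<otimes>\<^bsub>A\<^esub> inv_into (carrier A) h y) = x \<otimes>\<^bsub>B\<^esub> y"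
        using hh bij_betw_inv_into_right[OF bh] unfolding hom_def by (simp add: * that)
    qed
  qed
  then have "inv_into (carrier A) h \<in> iso B A" using HG by (simp add: iso_def)
  then show ?thesis by (rule is_isoI)
qed



context
  fixes p gn :: nat
  assumes pp: "Factorial_Ring.prime p" and p5: "p \<ge> 5" and gr: "residue_primroot p gn"
begin

lemma exp_add:
  assumes "0 \<le> t1" "0 \<le> t2"
  shows "[int gn ^ nat ((t1 + t2) mod int (p - 1)) = int gn ^ nat t1 * int gn ^ nat t2] (mod int p)"
proof -
  have q: "int (p - 1) > 0" using p5 by simp
  have "nat ((t1 + t2) mod int (p - 1)) = (nat t1 + nat t2) mod (p - 1)"
    using assms q by (simp add: nat_mod_distrib nat_add_distrib nat_diff_distrib)
  then have "int gn ^ nat ((t1 + t2) mod int (p - 1)) = int gn ^ ((nat t1 + nat t2) mod (p - 1))" by simp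
  also have "[\<dots> = int gn ^ (nat t1 + nat t2)] (mod int p)"
    using g_pow_mod[OF pp p5 gr, of "nat t1 + nat t2"] by (simp add: cong_sym)
  finally show ?thesis by (simp add: power_add)
qed

lemma cop_g: "coprime (int gn ^ n) (int p)"
  by (rule prime_cop[OF Pprime[OF pp p5 gr] g_nd[OF pp p5 gr]])

lemma Psi_in:
  assumes "\<tau> \<in> carrier (Tgrp (int gn) p)"
  shows "Psi (int gn) p \<tau> \<in> carrier (AutK (Mgrp (int p)) (KM (int p)))"
proof -
  have P1: "int p > 1" using p5 by simp
  show ?thesis unfolding Psi_def carrier_AutK
    using psi_auto[OF P1 cop_g cop_g] by simp
qed

lemma Psi_auto: "\<tau> \<in> carrier (Tgrp (int gn) p) \<Longrightarrow> Psi (int gn) p \<tau> \<in> auto (Mgrp (int p))"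
  using Psi_in by (simp add: carrier_AutK)

lemma Psi_hom:
  assumes t1: "\<tau>1 \<in> carrier (Tgrp (int gn) p)" and t2: "\<tau>2 \<in> carrier (Tgrp (int gn) p)"
  shows "Psi (int gn) p (\<tau>1 \<otimes>\<^bsub>Tgrp (int gn) p\<^esub> \<tau>2) =
     Psi (int gn) p \<tau>1 \<otimes>\<^bsub>AutK (Mgrp (int p)) (KM (int p))\<^esub> Psi (int gn) p \<tau>2"
proof -
  let ?g = "int gn" and ?P = "int p" and ?q = "int (p - 1)"
  obtain s1 u1 v1 w1 where e1: "\<tau>1 = (s1, ((u1, v1), w1))" by (metis prod.collapse)
  obtain s2 u2 v2 w2 where e2: "\<tau>2 = (s2, ((u2, v2), w2))" by (metis prod.collapse)
  have r: "0 \<le> s1" "0 \<le> s2" "0 \<le> w1" "0 \<le> w2" "0 \<le> u2" "u2 < ?P" "0 \<le> v2" "v2 < ?P"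
    using t1 t2 p5 by (auto simp: e1 e2 carrier_T)
  have prod: "\<tau>1 \<otimes>\<^bsub>Tgrp ?g p\<^esub> \<tau>2 = ((s1 + s2) mod ?q,
     (((u1 + (?g ^ nat w1 * u2) mod ?P) mod ?P, (v1 + ((?g ^ nat w1)^2 * v2) mod ?P) mod ?P),
      (w1 + w2) mod ?q))"
    unfolding e1 e2 using p5 r by (intro mult_T) auto
  have RHS: "Psi ?g p \<tau>1 \<otimes>\<^bsub>AutK (Mgrp ?P) (KM ?P)\<^esub> Psi ?g p \<tau>2
      = compose (carrier (Mgrp ?P)) (Psi ?g p \<tau>1) (Psi ?g p \<tau>2)"
    by (rule mult_AutK[OF Psi_auto[OF t1] Psi_auto[OF t2]])
  show ?thesis unfolding RHS
  proof (rule ext)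
    fix m
    show "Psi ?g p (\<tau>1 \<otimes>\<^bsub>Tgrp ?g p\<^esub> \<tau>2) m = compose (carrier (Mgrp ?P)) (Psi ?g p \<tau>1) (Psi ?g p \<tau>2) m"
    proof (cases "m \<in> carrier (Mgrp ?P)")
      case False
      then show ?thesis by (simp add: compose_def Psi_def psi_def)
    next
      case True
      have P0: "?P > 0" using p5 by simp
      let ?k1 = "?g ^ nat w1" and ?k2 = "?g ^ nat w2" and ?z1 = "?g ^ nat s1" and ?z2 = "?g ^ nat s2"
      have in2: "red ?P (Fe ?k2 ?z2 u2 v2 m) \<in> carrier (Mgrp ?P)" by (rule red_in_carrier[OF P0])
      have "compose (carrier (Mgrp ?P)) (Psi ?g p \<tau>1) (Psi ?g p \<tau>2) m
           = red ?P (Fe ?k1 ?z1 u1 v1 (red ?P (Fe ?k2 ?z2 u2 v2 m)))"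
        using True in2 by (simp add: compose_def Psi_def psi_def e1 e2)
      also have "\<dots> = red ?P (Fe ?k1 ?z1 u1 v1 (Fe ?k2 ?z2 u2 v2 m))"
        by (rule Fe_resp) simp_all
      also have "\<dots> = red ?P (Fe (?k1 * ?k2) (?z1 * ?z2) (u1 + ?k1 * u2) (v1 + ?k1^2 * v2) m)"
        by (simp add: Fe_comp)
      also have "\<dots> = red ?P (Fe (?g ^ nat ((w1 + w2) mod ?q)) (?g ^ nat ((s1 + s2) mod ?q))
            ((u1 + (?g ^ nat w1 * u2) mod ?P) mod ?P) ((v1 + ((?g ^ nat w1)^2 * v2) mod ?P) mod ?P) m)"
      proof (rule Fe_resp)
        show "[?k1 * ?k2 = ?g ^ nat ((w1 + w2) mod ?q)] (mod ?P)"
          using exp_add[OF r(3,4)] by (simp add: cong_sym)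
        show "[?z1 * ?z2 = ?g ^ nat ((s1 + s2) mod ?q)] (mod ?P)"
          using exp_add[OF r(1,2)] by (simp add: cong_sym)
        show "[u1 + ?k1 * u2 = (u1 + ?k1 * u2 mod ?P) mod ?P] (mod ?P)"
          by (simp add: cong_def mod_simps)
        show "[v1 + ?k1^2 * v2 = (v1 + ?k1^2 * v2 mod ?P) mod ?P] (mod ?P)"
          by (simp add: cong_def mod_simps)
      qed simp
      also have "\<dots> = Psi ?g p (\<tau>1 \<otimes>\<^bsub>Tgrp ?g p\<^esub> \<tau>2) m"
        using True by (simp add: prod Psi_def psi_def)
      finally show ?thesis by simp
    qed
  qed
qed

end



lemma Psi_d: "p \<ge> 5 \<Longrightarrow> Psi g p (s, ((u, v), t)) dM = red (int p) (0, 0, 0, g ^ nat t)"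
  by (simp add: Psi_def psi_def dM_def Mgrp_carrier)

lemma Psi_c: "p \<ge> 5 \<Longrightarrow> Psi g p (s, ((u, v), t)) cM =
    red (int p) (g ^ nat s * (v + u^2), g ^ nat s * u, g ^ nat s, 0)"
  by (simp add: Psi_def psi_def cM_def Mgrp_carrier)

context
  fixes p gn :: nat
  assumes pp: "Factorial_Ring.prime p" and p5: "p \<ge> 5" and gr: "residue_primroot p gn"
begin

lemma Psi_inj: "inj_on (Psi (int gn) p) (carrier (Tgrp (int gn) p))"
proof (rule inj_onI)
  let ?g = "int gn" and ?P = "int p"
  fix \<tau>1 \<tau>2 assume t1: "\<tau>1 \<in> carrier (Tgrp ?g p)" and t2: "\<tau>2 \<in> carrier (Tgrp ?g p)"
    and eq: "Psi ?g p \<tau>1 = Psi ?g p \<tau>2"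
  obtain s1 u1 v1 w1 where e1: "\<tau>1 = (s1, ((u1, v1), w1))" by (metis prod.collapse)
  obtain s2 u2 v2 w2 where e2: "\<tau>2 = (s2, ((u2, v2), w2))" by (metis prod.collapse)
  have r: "0 \<le> s1" "0 \<le> s2" "0 \<le> w1" "0 \<le> w2" "0 \<le> u1" "u1 < ?P" "0 \<le> v1" "v1 < ?P"
     "0 \<le> u2" "u2 < ?P" "0 \<le> v2" "v2 < ?P" "s1 < int (p - 1)" "s2 < int (p - 1)"
     "w1 < int (p - 1)" "w2 < int (p - 1)"
    using t1 t2 p5 by (auto simp: e1 e2 carrier_T)
  have "Psi ?g p \<tau>1 dM = Psi ?g p \<tau>2 dM" using eq by simp
  then have "[?g ^ nat w1 = ?g ^ nat w2] (mod ?P)" using p5 by (simp add: e1 e2 Psi_d cong_def)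
  then have "nat w1 = nat w2" using r by (intro g_inj[OF pp p5 gr]) auto
  then have w: "w1 = w2" using r by simp
  have "Psi ?g p \<tau>1 cM = Psi ?g p \<tau>2 cM" using eq by simp
  then have c: "[?g ^ nat s1 * (v1 + u1^2) = ?g ^ nat s2 * (v2 + u2^2)] (mod ?P)"
    "[?g ^ nat s1 * u1 = ?g ^ nat s2 * u2] (mod ?P)" "[?g ^ nat s1 = ?g ^ nat s2] (mod ?P)"
    using p5 by (simp_all add: e1 e2 Psi_c cong_def)
  have "nat s1 = nat s2" using r c(3) by (intro g_inj[OF pp p5 gr]) auto
  then have s: "s1 = s2" using r by simp
  have cop: "coprime (?g ^ nat s1) ?P" by (rule cop_g[OF pp p5 gr])
  have "[u1 = u2] (mod ?P)" using c(2) s cong_mult_lcancel[OF cop] by simp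
  then have u: "u1 = u2" using r by (intro cong_less_imp_eq_int) auto
  have "[v1 + u1^2 = v2 + u1^2] (mod ?P)" using c(1) s u cong_mult_lcancel[OF cop] by simp
  then have "[v1 = v2] (mod ?P)" by (simp add: cong_add_rcancel)
  then have v: "v1 = v2" using r by (intro cong_less_imp_eq_int) auto
  show "\<tau>1 = \<tau>2" using s u v w by (simp add: e1 e2)
qed

lemma Psi_surj:
  assumes th: "\<theta> \<in> carrier (AutK (Mgrp (int p)) (KM (int p)))"
  shows "\<theta> \<in> Psi (int gn) p ` carrier (Tgrp (int gn) p)"
proof -
  let ?g = "int gn" and ?P = "int p" and ?M = "Mgrp (int p)"
  have P1: "?P > 1" using p5 by simp
  interpret M: group ?M using group_Mgrp P1 by simp
  obtain k x y z where kxyz: "\<theta> dM = (0,0,0,k)" "\<theta> cM = (x,y,z,0)"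
    "0 \<le> k" "k < ?P" "0 \<le> x" "x < ?P" "0 \<le> y" "y < ?P" "0 \<le> z" "z < ?P"
    "\<not> ?P dvd k" "\<not> ?P dvd z"
    using AutK_M_char[OF pp p5 refl th] by blast
  obtain i where i: "i < p - 1" "[?g ^ i = k] (mod ?P)" using g_surj[OF pp p5 gr kxyz(11)] by blast
  obtain j where j: "j < p - 1" "[?g ^ j = z] (mod ?P)" using g_surj[OF pp p5 gr kxyz(12)] by blast
  have copz: "coprime z ?P" by (rule prime_cop[OF Pprime[OF pp p5 gr] kxyz(12)])
  obtain zi where zi: "[z * zi = 1] (mod ?P)" using cong_solve_coprime_int[OF copz] by blast
  define u where "u = (y * zi) mod ?P"
  define v where "v = (x * zi - u^2) mod ?P"
  define \<tau> where "\<tau> = (int j, ((u, v), int i))"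
  have ij: "int i < int p - 1" "int j < int p - 1" using i(1) j(1) by arith+
  have tc: "\<tau> \<in> carrier (Tgrp ?g p)" using ij p5 by (simp add: \<tau>_def carrier_T u_def v_def)
  have ta: "Psi ?g p \<tau> \<in> auto ?M" by (rule Psi_auto[OF pp p5 gr tc])
  have thA: "\<theta> \<in> auto ?M" using th by (simp add: carrier_AutK)
  have hP: "Psi ?g p \<tau> \<in> hom ?M ?M" using ta by (simp add: auto_def)
  have hT: "\<theta> \<in> hom ?M ?M" using thA by (simp add: auto_def)
  have td: "\<theta> dM = red ?P (0,0,0,k)" using kxyz by simp
  have tcc: "\<theta> cM = red ?P (x,y,z,0)" using kxyz by simp
  have Pd: "Psi ?g p \<tau> dM = red ?P (0,0,0,k)"
    using p5 i(2) by (simp add: \<tau>_def Psi_d cong_def)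
  have Pc: "Psi ?g p \<tau> cM = red ?P (x,y,z,0)"
  proof -
    have c1: "[?g ^ j * u = y] (mod ?P)"
    proof -
      have "[?g ^ j * u = z * (y * zi)] (mod ?P)" unfolding u_def by (intro cong_mult j(2)) simp
      also have "z * (y * zi) = y * (z * zi)" by simp
      also have "[y * (z * zi) = y * 1] (mod ?P)" by (intro cong_mult cong_refl zi)
      finally show ?thesis by simp
    qed
    have c2: "[?g ^ j * (v + u^2) = x] (mod ?P)"
    proof -
      have "[?g ^ j * (v + u^2) = z * ((x * zi - u^2) + u^2)] (mod ?P)"
        unfolding v_def by (intro cong_mult cong_add j(2) cong_refl) simp
      also have "z * ((x * zi - u^2) + u^2) = x * (z * zi)" by (simp add: algebra_simps)
      also have "[x * (z * zi) = x * 1] (mod ?P)" by (intro cong_mult cong_refl zi)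
      finally show ?thesis by simp
    qed
    show ?thesis using p5 c1 c2 j(2) by (simp add: \<tau>_def Psi_c cong_def)
  qed
  have gA: "\<theta> aM = red ?P (2*k^2*z, 0, 0, 0)" "\<theta> bM = red ?P (2*k*y + k^2*z, k*z, 0, 0)"
    using gens_image[OF p5 refl hT td tcc] by simp_all
  have gP: "Psi ?g p \<tau> aM = red ?P (2*k^2*z, 0, 0, 0)" "Psi ?g p \<tau> bM = red ?P (2*k*y + k^2*z, k*z, 0, 0)"
    using gens_image[OF p5 refl hP Pd Pc] by simp_all
  have S: "{aM, bM, cM, dM} \<subseteq> carrier ?M" using p5 by (auto simp: aM_def bM_def cM_def dM_def Mgrp_carrier)
  have odd: "odd p" using pp p5 prime_odd_nat[of p] by auto
  have "Psi ?g p \<tau> = \<theta>"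
  proof (rule extensionalityI)
    show "Psi ?g p \<tau> \<in> extensional (carrier ?M)" using ta by (simp add: auto_def Bij_def)
    show "\<theta> \<in> extensional (carrier ?M)" using thA by (simp add: auto_def Bij_def)
    fix m assume "m \<in> carrier ?M"
    then have "m \<in> generate ?M {aM, bM, cM, dM}" using M_generated[OF p5 odd] by simp
    then have mg: "m \<in> generate ?M {aM, bM, cM, dM}" .
    have eqS: "\<And>s. s \<in> {aM, bM, cM, dM} \<Longrightarrow> Psi ?g p \<tau> s = \<theta> s"
      using gA gP Pd Pc td tcc by auto
    show "Psi ?g p \<tau> m = \<theta> m"
      by (rule hom_agree_gen[OF M.group_axioms hP hT M.group_axioms S eqS mg])
  qed
  then show ?thesis using tc by blast
qed

lemma T_iso: "Psi (int gn) p \<in> iso (Tgrp (int gn) p) (AutK (Mgrp (int p)) (KM (int p)))"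
proof (rule isoI)
  show "Psi (int gn) p \<in> hom (Tgrp (int gn) p) (AutK (Mgrp (int p)) (KM (int p)))"
    by (rule homI) (auto intro: Psi_in[OF pp p5 gr] Psi_hom[OF pp p5 gr])
  show "bij_betw (Psi (int gn) p) (carrier (Tgrp (int gn) p)) (carrier (AutK (Mgrp (int p)) (KM (int p))))"
    unfolding bij_betw_def using Psi_inj Psi_surj Psi_in[OF pp p5 gr] by blast
qed

end



context
  fixes p gn :: nat
  assumes pp: "Factorial_Ring.prime p" and p5: "p \<ge> 5" and gr: "residue_primroot p gn"
begin

lemma cIp [simp]: "carrier (integer_mod_group p) = {0..<int p}"
  using p5 by (simp add: carrier_integer_mod_group)

lemma cIq [simp]: "carrier (integer_mod_group (p - 1)) = {0..<int (p - 1)}"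
  using p5 by (simp add: carrier_integer_mod_group)

lemma phi_auto:
  assumes t: "0 \<le> t"
  shows "phi (int gn) p t \<in> auto (integer_mod_group p \<times>\<times> integer_mod_group p)"
proof -
  let ?Z = "integer_mod_group p \<times>\<times> integer_mod_group p" and ?P = "int p" and ?k = "int gn ^ nat t"
  have cZ: "carrier ?Z = {0..<?P} \<times> {0..<?P}" using p5 by (simp add: carrier_integer_mod_group)
  have P0: "?P > 0" using p5 by simp
  have hom: "phi (int gn) p t \<in> hom ?Z ?Z"
  proof (rule homI)
    fix x assume "x \<in> carrier ?Z"
    then show "phi (int gn) p t x \<in> carrier ?Z" using P0 by (auto simp: phi_def cZ carrier_integer_mod_group)
  next
    fix x y assume x: "x \<in> carrier ?Z" and y: "y \<in> carrier ?Z"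
    obtain x1 x2 where xe: "x = (x1, x2)" by (cases x)
    obtain y1 y2 where ye: "y = (y1, y2)" by (cases y)
    have xy: "x \<otimes>\<^bsub>?Z\<^esub> y \<in> carrier ?Z" using x y P0 by (auto simp: xe ye cZ carrier_integer_mod_group)
    show "phi (int gn) p t (x \<otimes>\<^bsub>?Z\<^esub> y) = phi (int gn) p t x \<otimes>\<^bsub>?Z\<^esub> phi (int gn) p t y"
      using x y xy unfolding phi_def
      by (simp add: xe ye mod_simps distrib_left del: carrier_DirProd)
  qed
  have inj: "inj_on (phi (int gn) p t) (carrier ?Z)"
  proof (rule inj_onI)
    fix x y assume x: "x \<in> carrier ?Z" and y: "y \<in> carrier ?Z" and eq: "phi (int gn) p t x = phi (int gn) p t y"
    obtain x1 x2 where xe: "x = (x1, x2)" by (cases x)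
    obtain y1 y2 where ye: "y = (y1, y2)" by (cases y)
    have r: "0 \<le> x1" "x1 < ?P" "0 \<le> x2" "x2 < ?P" "0 \<le> y1" "y1 < ?P" "0 \<le> y2" "y2 < ?P"
      using x y by (auto simp: xe ye cZ)
    have e: "[?k * x1 = ?k * y1] (mod ?P)" "[?k^2 * x2 = ?k^2 * y2] (mod ?P)"
      using eq x y by (simp_all add: phi_def xe ye cong_def del: carrier_DirProd)
    have c1: "coprime ?k ?P" by (rule cop_g[OF pp p5 gr])
    have c2: "coprime (?k^2) ?P" using c1 by simp
    have "[x1 = y1] (mod ?P)" using e(1) cong_mult_lcancel[OF c1] by simp
    then have "x1 = y1" using r by (intro cong_less_imp_eq_int) auto
    moreover have "[x2 = y2] (mod ?P)" using e(2) cong_mult_lcancel[OF c2] by simp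
    then have "x2 = y2" using r by (intro cong_less_imp_eq_int) auto
    ultimately show "x = y" by (simp add: xe ye)
  qed
  have sub: "phi (int gn) p t ` carrier ?Z \<subseteq> carrier ?Z" using hom unfolding hom_def Pi_def by blast
  have "phi (int gn) p t ` carrier ?Z = carrier ?Z"
    by (rule endo_inj_surj[OF _ sub inj]) (simp add: cZ)
  then have "bij_betw (phi (int gn) p t) (carrier ?Z) (carrier ?Z)" using inj by (simp add: bij_betw_def)
  then show ?thesis using hom by (simp add: auto_def Bij_def phi_def)
qed

lemma phi_hom: "phi (int gn) p \<in> hom (integer_mod_group (p - 1)) (AutoGroup (integer_mod_group p \<times>\<times> integer_mod_group p))"
proof (rule homI)
  let ?Z = "integer_mod_group p \<times>\<times> integer_mod_group p" and ?P = "int p" and ?q = "int (p - 1)"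
  have cq: "carrier (integer_mod_group (p - 1)) = {0..<?q}" using p5 by (simp add: carrier_integer_mod_group)
  fix t assume "t \<in> carrier (integer_mod_group (p - 1))"
  then show "phi (int gn) p t \<in> carrier (AutoGroup ?Z)"
    using phi_auto cq by (simp add: AutoGroup_def)
next
  let ?Z = "integer_mod_group p \<times>\<times> integer_mod_group p" and ?P = "int p" and ?q = "int (p - 1)"
  have cq: "carrier (integer_mod_group (p - 1)) = {0..<?q}" using p5 by (simp add: carrier_integer_mod_group)
  have cZ: "carrier ?Z = {0..<?P} \<times> {0..<?P}" using p5 by (simp add: carrier_integer_mod_group)
  fix t1 t2 assume t1: "t1 \<in> carrier (integer_mod_group (p - 1))" and t2: "t2 \<in> carrier (integer_mod_group (p - 1))"
  have r: "0 \<le> t1" "0 \<le> t2" using t1 t2 cq by auto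
  have B1: "phi (int gn) p t1 \<in> Bij (carrier ?Z)" "phi (int gn) p t2 \<in> Bij (carrier ?Z)"
    using phi_auto[OF r(1)] phi_auto[OF r(2)] by (auto simp: auto_def)
  have m: "phi (int gn) p t1 \<otimes>\<^bsub>AutoGroup ?Z\<^esub> phi (int gn) p t2 = compose (carrier ?Z) (phi (int gn) p t1) (phi (int gn) p t2)"
    using B1 by (simp add: AutoGroup_def BijGroup_def)
  have ex: "[int gn ^ nat ((t1 + t2) mod ?q) = int gn ^ nat t1 * int gn ^ nat t2] (mod ?P)"
    by (rule exp_add[OF pp p5 gr r])
  then have ex2: "[(int gn ^ nat ((t1 + t2) mod ?q))^2 = (int gn ^ nat t1)^2 * (int gn ^ nat t2)^2] (mod ?P)"
    by (metis cong_pow power_mult_distrib)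
  show "phi (int gn) p (t1 \<otimes>\<^bsub>integer_mod_group (p - 1)\<^esub> t2) = phi (int gn) p t1 \<otimes>\<^bsub>AutoGroup ?Z\<^esub> phi (int gn) p t2"
    unfolding m
  proof (rule ext)
    fix x
    show "phi (int gn) p (t1 \<otimes>\<^bsub>integer_mod_group (p - 1)\<^esub> t2) x = compose (carrier ?Z) (phi (int gn) p t1) (phi (int gn) p t2) x"
    proof (cases "x \<in> carrier ?Z")
      case False then show ?thesis by (simp add: compose_def phi_def del: carrier_DirProd)
    next
      case True
      obtain x1 x2 where xe: "x = (x1, x2)" by (cases x)
      have P0: "?P > 0" using p5 by simp
      have in2: "phi (int gn) p t2 x \<in> carrier ?Z" using True P0 by (auto simp: phi_def cZ xe carrier_integer_mod_group)
      have e1: "(int gn ^ nat ((t1 + t2) mod ?q) * x1) mod ?P = (int gn ^ nat t1 * (int gn ^ nat t2 * x1 mod ?P)) mod ?P"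
      proof -
        have "[int gn ^ nat ((t1 + t2) mod ?q) * x1 = int gn ^ nat t1 * int gn ^ nat t2 * x1] (mod ?P)"
          by (intro cong_mult ex cong_refl)
        then show ?thesis by (simp add: cong_def mod_simps mult.assoc)
      qed
      have e2: "((int gn ^ nat ((t1 + t2) mod ?q))^2 * x2) mod ?P = ((int gn ^ nat t1)^2 * ((int gn ^ nat t2)^2 * x2 mod ?P)) mod ?P"
      proof -
        have "[(int gn ^ nat ((t1 + t2) mod ?q))^2 * x2 = (int gn ^ nat t1)^2 * (int gn ^ nat t2)^2 * x2] (mod ?P)"
          by (intro cong_mult ex2 cong_refl)
        then show ?thesis by (simp add: cong_def mod_simps mult.assoc)
      qed
      show ?thesis using True in2 e1 e2
        by (simp add: compose_def phi_def xe del: carrier_DirProd)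
    qed
  qed
qed

end



theorem mainTheorem11:
  fixes G :: "('a, 'c) monoid_scheme" and p :: nat and a b c d :: 'a
  assumes "Factorial_Ring.prime p" and "p \<ge> 5"
    and "is_G10_presentation G p a b c d"
  shows "\<exists>\<phi>. \<phi> \<in> hom (integer_mod_group (p - 1))
                     (AutoGroup (integer_mod_group p \<times>\<times> integer_mod_group p)) \<and>
             AutK G (generate G {d}) \<cong>
               integer_mod_group (p - 1) \<times>\<times>
                 semidirect_product (integer_mod_group p \<times>\<times> integer_mod_group p)
                   (integer_mod_group (p - 1)) \<phi>"
proof -
  note pp = assms(1) and p5 = assms(2) and pres = assms(3)
  obtain gn where gr: "residue_primroot p gn" using prime_primitive_root_exists[of p] pp p5 by auto
  let ?M = "Mgrp (int p)"
  have P1: "int p > 1" using p5 by simp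
  interpret M: group ?M using group_Mgrp P1 by simp
  have G: "group G" using pres by (simp add: is_G10_presentation_def)
  interpret G: group G by fact
  obtain h where h: "h \<in> iso G ?M" "h d = dM" using G_iso_M[OF pres pp p5] by blast
  have dc: "d \<in> carrier G" using carr[OF pres p5] by simp
  have K: "generate G {d} \<subseteq> carrier G" using dc by (simp add: G.generate_incl)
  interpret gh: group_hom G ?M h using h(1) by (simp add: group_hom_def group_hom_axioms_def G M.group_axioms iso_def)
  have "h ` generate G {d} = generate ?M (h ` {d})" using gh.generate_img[of "{d}"] dc by simp
  also have "\<dots> = KM (int p)" using h(2) KM_gen[OF P1] by simp
  finally have hK: "h ` generate G {d} = KM (int p)" .
  have i1: "AutK ?M (KM (int p)) \<cong> AutK G (generate G {d})"
    using AutK_transport[OF G M.group_axioms h(1) K] hK by simp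
  have i2: "Tgrp (int gn) p \<cong> AutK ?M (KM (int p))"
    using T_iso[OF pp p5 gr] by (rule is_isoI)
  have "Tgrp (int gn) p \<cong> AutK G (generate G {d})" using iso_trans[OF i2 i1] .
  then obtain f where f: "f \<in> iso (Tgrp (int gn) p) (AutK G (generate G {d}))" by (auto simp: is_iso_def)
  have "AutK G (generate G {d}) \<cong> Tgrp (int gn) p"
    by (rule iso_sym_closed[OF f]) (rule T_closed[OF p5])
  then show ?thesis using phi_hom[OF pp p5 gr] unfolding Tgrp_def by blast
qed


end
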